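(* For all $n\ge1$ and each $\mathsf{stat}\in\{\mathsf{nest},\mathsf{inv}\}$, with $D_n^{(\mathsf{stat},\mathsf{exc})}(q,t)=\sum_{\sigma\in\mathfrak{D}_n}q^{\mathsf{stat}\,\sigma}t^{\mathsf{exc}\,\sigma}$, $$D_{n}^{(\mathsf{stat}, \mathsf{exc})}(q, t)=\left(\frac{1+xt}{1+x}\right)^{n}P^{(\mathsf{stat}, \mathsf{cpk},\mathsf{exc})}\left(\mathfrak{D}_n; q, \frac{(1+x)^{2}t}{(x+t)(1+xt)},\frac{x+t}{1+xt}\right),$$ equivalently, $$P^{(\mathsf{stat}, \mathsf{cpk},\mathsf{exc})}(\mathfrak{D}_n; q, x,t)=\left(\frac{1+u}{1+uv}\right)^{n}D_{n}^{(\mathsf{stat}, \mathsf{exc})}(q, v),$$ where $u=\frac{1+t^{2}-2xt-(1-t)\sqrt{(1+t)^{2}-4xt}}{2(1-x)t}$ and $v=\frac{(1+t)^{2}-2xt-(1+t)\sqrt{(1+t)^{2}-4xt}}{2xt}$.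
   Context: $\mathfrak{D}_n$ is the set of derangements of $[n]$. $P^{(\mathsf{stat}_1,\ldots,\mathsf{stat}_m)}(\Omega;t_1,\ldots,t_m)=\sum_{\sigma\in\Omega}\prod_jt_j^{\mathsf{stat}_j\sigma}$. $\mathsf{exc}\,\sigma=\#\{i:\sigma(i)>i\}$, $\mathsf{cpk}\,\sigma=\#\{x:\sigma^{-1}(x)<x>\sigma(x)\}$, $\mathsf{inv}$ the inversion number, $\mathsf{nest}\,\sigma=\sum_{i}\#\{j:j<i<\sigma(i)<\sigma(j)\text{ or }\sigma(j)<\sigma(i)\le i<j\}$. *)

theory Defs
  imports Complex_Main "HOL-Combinatorics.Permutations"
begin

definition derangements :: "nat \<Rightarrow> (nat \<Rightarrow> nat) set" where
  "derangements n = {\<sigma>. \<sigma> permutes {1..n} \<and> (\<forall>i\<in>{1..n}. \<sigma> i \<noteq> i)}"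

definition exc_stat :: "nat \<Rightarrow> (nat \<Rightarrow> nat) \<Rightarrow> nat" where
  "exc_stat n \<sigma> = card {i\<in>{1..n}. \<sigma> i > i}"

definition cpk_stat :: "nat \<Rightarrow> (nat \<Rightarrow> nat) \<Rightarrow> nat" where
  "cpk_stat n \<sigma> = card {x\<in>{1..n}. inv \<sigma> x < x \<and> \<sigma> x < x}"

definition inv_stat :: "nat \<Rightarrow> (nat \<Rightarrow> nat) \<Rightarrow> nat" where
  "inv_stat n \<sigma> = card {(i, j). i \<in> {1..n} \<and> j \<in> {1..n} \<and> i < j \<and> \<sigma> i > \<sigma> j}"

definition nest_stat :: "nat \<Rightarrow> (nat \<Rightarrow> nat) \<Rightarrow> nat" where
  "nest_stat n \<sigma> = (\<Sum>i\<in>{1..n}. card {j\<in>{1..n}.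
      (j < i \<and> i < \<sigma> i \<and> \<sigma> i < \<sigma> j) \<or> (\<sigma> j < \<sigma> i \<and> \<sigma> i \<le> i \<and> i < j)})"

definition P2 :: "(nat \<Rightarrow> nat) set \<Rightarrow> ((nat \<Rightarrow> nat) \<Rightarrow> nat) \<Rightarrow> ((nat \<Rightarrow> nat) \<Rightarrow> nat)
    \<Rightarrow> real \<Rightarrow> real \<Rightarrow> real" where
  "P2 \<Omega> s1 s2 t1 t2 = (\<Sum>\<sigma>\<in>\<Omega>. t1 ^ s1 \<sigma> * t2 ^ s2 \<sigma>)"

definition P3 :: "(nat \<Rightarrow> nat) set \<Rightarrow> ((nat \<Rightarrow> nat) \<Rightarrow> nat) \<Rightarrow> ((nat \<Rightarrow> nat) \<Rightarrow> nat)
    \<Rightarrow> ((nat \<Rightarrow> nat) \<Rightarrow> nat) \<Rightarrow> real \<Rightarrow> real \<Rightarrow> real \<Rightarrow> real" where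
  "P3 \<Omega> s1 s2 s3 t1 t2 t3 = (\<Sum>\<sigma>\<in>\<Omega>. t1 ^ s1 \<sigma> * t2 ^ s2 \<sigma> * t3 ^ s3 \<sigma>)"

end

theory Submission
  imports Defs
begin

definition Pt :: "nat \<Rightarrow> (nat \<Rightarrow> nat) set" where
  "Pt x = {f. (\<forall>i. i \<notin> {1..x} \<longrightarrow> f i = i) \<and> (\<forall>i\<in>{1..x}. f i \<le> x \<and> f i \<noteq> i)
     \<and> inj_on f {i\<in>{1..x}. f i \<noteq> 0}}"

definition Ou :: "nat \<Rightarrow> (nat \<Rightarrow> nat) \<Rightarrow> nat set" where
  "Ou x f = {i\<in>{1..x}. f i = 0}"

definition Ol :: "nat \<Rightarrow> (nat \<Rightarrow> nat) \<Rightarrow> nat set" where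
  "Ol x f = {1..x} - f ` {1..x}"

definition ext :: "nat \<Rightarrow> (nat \<Rightarrow> nat) \<Rightarrow> nat \<Rightarrow> nat \<Rightarrow> nat \<Rightarrow> nat" where
  "ext x f u l = (if u = 0 then f(Suc x := l) else f(u := Suc x, Suc x := l))"

definition Ch :: "nat \<Rightarrow> (nat \<Rightarrow> nat) \<Rightarrow> (nat \<times> nat) set" where
  "Ch x f = insert 0 (Ou x f) \<times> insert 0 (Ol x f)"

lemma Ou_sub: "Ou x f \<subseteq> {1..x}" by (auto simp: Ou_def)
lemma Ol_sub: "Ol x f \<subseteq> {1..x}" by (auto simp: Ol_def)

lemma Pt_D:
  assumes "f \<in> Pt x"
  shows "\<And>i. i \<notin> {1..x} \<Longrightarrow> f i = i" "\<And>i. i \<in> {1..x} \<Longrightarrow> f i \<le> x"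
    "\<And>i. i \<in> {1..x} \<Longrightarrow> f i \<noteq> i"
    "\<And>i j. i \<in> {1..x} \<Longrightarrow> j \<in> {1..x} \<Longrightarrow> f i = f j \<Longrightarrow> f i \<noteq> 0 \<Longrightarrow> i = j"
  using assms unfolding Pt_def inj_on_def by auto

lemma card_Ou_Ol:
  assumes "f \<in> Pt x"
  shows "card (Ol x f) = card (Ou x f)"
proof -
  let ?Z = "{i\<in>{1..x}. f i \<noteq> 0}"
  have inj: "inj_on f ?Z" using assms by (simp add: Pt_def)
  have N: "f ` ?Z \<subseteq> {1..x}" using Pt_D(2)[OF assms] by force
  have "Ol x f = {1..x} - f ` ?Z" unfolding Ol_def by auto
  hence "card (Ol x f) = x - card (f ` ?Z)" using N by (simp add: card_Diff_subset finite_subset)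
  also have "card (f ` ?Z) = card ?Z" using inj by (simp add: card_image)
  also have "card ?Z = x - card (Ou x f)"
  proof -
    have "{1..x} = ?Z \<union> Ou x f" "?Z \<inter> Ou x f = {}" by (auto simp: Ou_def)
    hence "card {1..x} = card ?Z + card (Ou x f)"
      by (metis card_Un_disjoint finite_Un finite_atLeastAtMost)
    thus ?thesis by simp
  qed
  also have "x - (x - card (Ou x f)) = card (Ou x f)"
    using card_mono[OF _ Ou_sub, of x f] by simp
  finally show ?thesis .
qed

lemma ext_Pt:
  assumes f: "f \<in> Pt x" and c: "(u, l) \<in> Ch x f"
  shows "ext x f u l \<in> Pt (Suc x)"
proof -
  have u: "u = 0 \<or> (u \<in> {1..x} \<and> f u = 0)" and l: "l = 0 \<or> (l \<in> {1..x} \<and> l \<notin> f ` {1..x})"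
    using c by (auto simp: Ch_def Ou_def Ol_def)
  note D = Pt_D[OF f]
  let ?g = "ext x f u l"
  have g1: "\<And>i. i \<notin> {1..Suc x} \<Longrightarrow> ?g i = i"
    using u D(1) by (auto simp: ext_def)
  have g2: "\<And>i. i \<in> {1..Suc x} \<Longrightarrow> ?g i \<le> Suc x \<and> ?g i \<noteq> i"
  proof -
    fix i assume i: "i \<in> {1..Suc x}"
    show "?g i \<le> Suc x \<and> ?g i \<noteq> i"
    proof (cases "i = Suc x")
      case True thus ?thesis using l by (auto simp: ext_def)
    next
      case False
      hence i': "i \<in> {1..x}" using i by auto
      thus ?thesis using u l D(2)[OF i'] D(3)[OF i'] by (auto simp: ext_def)
    qed
  qed
  have gS: "?g (Suc x) = l" by (simp add: ext_def)
  have gu: "u \<noteq> 0 \<Longrightarrow> ?g u = Suc x" using u by (auto simp: ext_def)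
  have go: "\<And>i. i \<noteq> Suc x \<Longrightarrow> u = 0 \<or> i \<noteq> u \<Longrightarrow> ?g i = f i" by (auto simp: ext_def)
  have k1: "j = Suc x" if "j \<in> {1..Suc x}" "?g (Suc x) = ?g j" "?g j \<noteq> 0" for j
  proof (rule ccontr)
    assume nj: "j \<noteq> Suc x"
    hence jx: "j \<in> {1..x}" using that(1) by auto
    have l0: "l \<in> {1..x}" "l \<notin> f ` {1..x}" using l that(2,3) gS by auto
    show False
    proof (cases "u \<noteq> 0 \<and> j = u")
      case True thus ?thesis using gu that(2) gS l0 by auto
    next
      case False thus ?thesis using go[OF nj] that(2) gS l0 jx by auto
    qed
  qed
  have k2: "j = u" if "u \<noteq> 0" "j \<in> {1..Suc x}" "?g u = ?g j" for j
  proof (rule ccontr)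
    assume nj: "j \<noteq> u"
    show False
    proof (cases "j = Suc x")
      case True thus ?thesis using gu gS that l by auto
    next
      case False
      hence jx: "j \<in> {1..x}" using that(2) by auto
      thus ?thesis using go[OF False] nj that gu D(2)[OF jx] by auto
    qed
  qed
  have g3: "inj_on ?g {i\<in>{1..Suc x}. ?g i \<noteq> 0}"
  proof (rule inj_onI)
    fix i j assume i: "i \<in> {i\<in>{1..Suc x}. ?g i \<noteq> 0}" and j: "j \<in> {i\<in>{1..Suc x}. ?g i \<noteq> 0}"
      and e: "?g i = ?g j"
    have i1: "i \<in> {1..Suc x}" "?g i \<noteq> 0" using i by simp_all
    have j1: "j \<in> {1..Suc x}" "?g j \<noteq> 0" using j by simp_all
    show "i = j"
    proof (cases "i = Suc x")
      case True thus ?thesis using k1[OF j1(1)] e j1(2) by simp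
    next
      case Fi: False
      show ?thesis
      proof (cases "j = Suc x")
        case True thus ?thesis using k1[OF i1(1)] e i1(2) by simp
      next
        case Fj: False
        show ?thesis
        proof (cases "u \<noteq> 0 \<and> i = u")
          case True thus ?thesis using k2[OF _ j1(1)] e by simp
        next
          case F2: False
          show ?thesis
          proof (cases "u \<noteq> 0 \<and> j = u")
            case True thus ?thesis using k2[OF _ i1(1)] e by simp
          next
            case F3: False
            have gi: "?g i = f i" using go[OF Fi] F2 by blast
            have gj: "?g j = f j" using go[OF Fj] F3 by blast
            have "i \<in> {1..x}" "j \<in> {1..x}" using i1 j1 Fi Fj by auto
            thus ?thesis using D(4) e gi gj i1(2) by metis
          qed
        qed
      qed
    qed
  qed
  show ?thesis using g1 g2 g3 unfolding Pt_def by blast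
qed

lemma ext_vals:
  assumes f: "f \<in> Pt x" and c: "(u, l) \<in> Ch x f"
  shows "ext x f u l (Suc x) = l" "u \<noteq> 0 \<Longrightarrow> ext x f u l u = Suc x"
    "\<And>i. i \<noteq> Suc x \<Longrightarrow> u = 0 \<or> i \<noteq> u \<Longrightarrow> ext x f u l i = f i"
    "\<And>i. i \<in> {1..x} \<Longrightarrow> ext x f u l i = Suc x \<longleftrightarrow> (u \<noteq> 0 \<and> i = u)"
proof -
  have u: "u = 0 \<or> (u \<in> {1..x} \<and> f u = 0)"
    using c by (auto simp: Ch_def Ou_def)
  show "ext x f u l (Suc x) = l" by (simp add: ext_def)
  show "u \<noteq> 0 \<Longrightarrow> ext x f u l u = Suc x" using u by (auto simp: ext_def)
  show g: "\<And>i. i \<noteq> Suc x \<Longrightarrow> u = 0 \<or> i \<noteq> u \<Longrightarrow> ext x f u l i = f i"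
  proof -
    fix i assume a: "i \<noteq> Suc x" "u = 0 \<or> i \<noteq> u"
    show "ext x f u l i = f i"
    proof (cases "u = 0")
      case True thus ?thesis using a(1) by (simp add: ext_def)
    next
      case False hence "i \<noteq> u" using a(2) by simp
      thus ?thesis using a(1) False by (simp add: ext_def)
    qed
  qed
  fix i assume i: "i \<in> {1..x}"
  show "ext x f u l i = Suc x \<longleftrightarrow> (u \<noteq> 0 \<and> i = u)"
  proof (cases "u \<noteq> 0 \<and> i = u")
    case True
    hence "ext x f u l i = Suc x" using u i by (simp add: ext_def)
    thus ?thesis using True by simp
  next
    case False
    have i1: "i \<noteq> Suc x" using i by simp
    have i2: "u = 0 \<or> i \<noteq> u" using False by blast
    have "ext x f u l i = f i" by (rule g[OF i1 i2])
    moreover have "f i \<le> x" using Pt_D(2)[OF f i] .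
    ultimately have "ext x f u l i \<noteq> Suc x" by simp
    thus ?thesis using False by blast
  qed
qed

lemma ext_inj: "inj_on (\<lambda>(f, ul). ext x f (fst ul) (snd ul)) (Sigma (Pt x) (Ch x))"
proof (rule inj_onI, clarsimp)
  fix f u l f' u' l'
  assume f: "f \<in> Pt x" and c: "(u, l) \<in> Ch x f" and f': "f' \<in> Pt x" and c': "(u', l') \<in> Ch x f'"
    and e: "ext x f u l = ext x f' u' l'"
  note V = ext_vals[OF f c] and V' = ext_vals[OF f' c']
  have ll: "l = l'" using V(1) V'(1) e by metis
  have u: "u = 0 \<or> u \<in> {1..x}" and u': "u' = 0 \<or> u' \<in> {1..x}"
    using c c' by (auto simp: Ch_def Ou_def)
  have uu: "u = u'"
  proof (cases "u = 0")
    case True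
    show ?thesis
    proof (rule ccontr)
      assume "u \<noteq> u'" hence "u' \<in> {1..x}" "u' \<noteq> 0" using True u' by auto
      thus False using V(4)[of u'] V'(4)[of u'] e True by auto
    qed
  next
    case False
    hence "u \<in> {1..x}" using u by auto
    thus ?thesis using V(4)[of u] V'(4)[of u] e False by auto
  qed
  have "f = f'"
  proof
    fix i
    show "f i = f' i"
    proof (cases "i = Suc x")
      case True thus ?thesis using Pt_D(1)[OF f] Pt_D(1)[OF f'] by auto
    next
      case F: False
      show ?thesis
      proof (cases "u \<noteq> 0 \<and> i = u")
        case True thus ?thesis using c c' uu by (auto simp: Ch_def Ou_def)
      next
        case False
        hence "ext x f u l i = f i" "ext x f' u' l' i = f' i" using V(3)[OF F] V'(3)[OF F] uu by auto
        thus ?thesis using e by simp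
      qed
    qed
  qed
  thus "f = f' \<and> u = u' \<and> l = l'" using uu ll by simp
qed

lemma ext_surj:
  assumes g: "g \<in> Pt (Suc x)"
  shows "g \<in> (\<lambda>(f, ul). ext x f (fst ul) (snd ul)) ` (Sigma (Pt x) (Ch x))"
proof -
  note D = Pt_D[OF g]
  obtain u where hu0: "u = 0 \<Longrightarrow> \<forall>i\<in>{1..x}. g i \<noteq> Suc x"
    and hu1: "u \<noteq> 0 \<Longrightarrow> u \<in> {1..x} \<and> g u = Suc x"
  proof (cases "\<exists>i\<in>{1..x}. g i = Suc x")
    case True
    then obtain i where i: "i \<in> {1..x}" "g i = Suc x" by blast
    hence "i \<noteq> 0" by simp
    thus ?thesis using that[of i] i by blast
  next
    case False
    thus ?thesis using that[of 0] by blast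
  qed
  have uniq: "i = u" if i: "i \<in> {1..x}" and gi: "g i = Suc x" for i
  proof (cases "u = 0")
    case True thus ?thesis using hu0 i gi by blast
  next
    case False
    hence u1: "u \<in> {1..x}" "g u = Suc x" using hu1 by blast+
    have "i \<in> {1..Suc x}" "u \<in> {1..Suc x}" using i u1 by auto
    thus ?thesis using D(4)[of i u] u1 gi by simp
  qed
  define l where "l = g (Suc x)"
  define f where "f = (\<lambda>i. if i = Suc x then Suc x else if u \<noteq> 0 \<and> i = u then 0 else g i)"
  have f_oth: "f i = g i" if "i \<noteq> Suc x" "\<not> (u \<noteq> 0 \<and> i = u)" for i
    using that unfolding f_def by presburger
  have f_S: "f (Suc x) = Suc x" unfolding f_def by simp
  have f_u: "u \<noteq> 0 \<Longrightarrow> f u = 0" using hu1 unfolding f_def by auto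
  have l1: "l \<le> x" "l \<noteq> Suc x" using D(2,3)[of "Suc x"] by (auto simp: l_def)
  have fP: "f \<in> Pt x"
  proof -
    have a1: "\<forall>i. i \<notin> {1..x} \<longrightarrow> f i = i"
    proof (intro allI impI)
      fix i assume i: "i \<notin> {1..x}"
      show "f i = i"
      proof (cases "i = Suc x")
        case False
        hence "i \<notin> {1..Suc x}" using i by auto
        moreover have "\<not> (u \<noteq> 0 \<and> i = u)"
        proof
          assume "u \<noteq> 0 \<and> i = u" thus False using hu1 i by blast
        qed
        ultimately show ?thesis using D(1) f_oth[OF False] by simp
      qed (simp add: f_S)
    qed
    have a2: "\<forall>i\<in>{1..x}. f i \<le> x \<and> f i \<noteq> i"
    proof
      fix i assume i: "i \<in> {1..x}"
      hence i': "i \<in> {1..Suc x}" by auto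
      show "f i \<le> x \<and> f i \<noteq> i"
      proof (cases "u \<noteq> 0 \<and> i = u")
        case True thus ?thesis using i f_u by auto
      next
        case False
        have "g i \<noteq> Suc x"
        proof
          assume "g i = Suc x" hence "i = u" using uniq[OF i] by simp
          thus False using False i by auto
        qed
        moreover have "i \<noteq> Suc x" using i by auto
        hence "f i = g i" using False by (rule f_oth)
        ultimately show ?thesis using D(2,3)[OF i'] by auto
      qed
    qed
    have a3: "inj_on f {i\<in>{1..x}. f i \<noteq> 0}"
    proof (rule inj_onI)
      fix i j assume i: "i \<in> {i\<in>{1..x}. f i \<noteq> 0}" and j: "j \<in> {i\<in>{1..x}. f i \<noteq> 0}"
        and e: "f i = f j"
      have ii: "i \<in> {1..x}" "f i \<noteq> 0" and jj: "j \<in> {1..x}" "f j \<noteq> 0" using i j by auto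
      have ni: "i \<noteq> Suc x" "j \<noteq> Suc x" using ii jj by auto
      have "\<not> (u \<noteq> 0 \<and> i = u)" using ii(2) f_u by metis
      hence fi: "f i = g i" using ni(1) by (intro f_oth)
      have "\<not> (u \<noteq> 0 \<and> j = u)" using jj(2) f_u by metis
      hence fj: "f j = g j" using ni(2) by (intro f_oth)
      have "i \<in> {1..Suc x}" "j \<in> {1..Suc x}" using ii jj by auto
      thus "i = j" using D(4)[of i j] e fi fj ii(2) by simp
    qed
    show ?thesis using a1 a2 a3 unfolding Pt_def by blast
  qed
  have uC: "u \<in> insert 0 (Ou x f)"
  proof (cases "u = 0")
    case False thus ?thesis using hu1 f_u by (simp add: Ou_def)
  qed simp
  have lC: "l \<in> insert 0 (Ol x f)"
  proof (cases "l = 0")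
    case False
    have "l \<in> {1..x}" using False l1 by auto
    moreover have "l \<notin> f ` {1..x}"
    proof
      assume "l \<in> f ` {1..x}"
      then obtain i where i: "i \<in> {1..x}" "f i = l" by auto
      have ni: "i \<noteq> Suc x" using i by auto
      have "\<not> (u \<noteq> 0 \<and> i = u)" using i(2) f_u False by metis
      hence "f i = g i" using ni by (intro f_oth)
      moreover have "i \<in> {1..Suc x}" "Suc x \<in> {1..Suc x}" using i by auto
      ultimately show False using D(4)[of i "Suc x"] i ni False by (simp add: l_def)
    qed
    ultimately show ?thesis by (simp add: Ol_def)
  qed simp
  have "ext x f u l = g"
  proof
    fix i
    show "ext x f u l i = g i"
    proof (cases "i = Suc x")
      case True thus ?thesis by (simp add: ext_def l_def)
    next
      case F: False
      show ?thesis
      proof (cases "u \<noteq> 0 \<and> i = u")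
        case True thus ?thesis using hu1 F by (simp add: ext_def)
      next
        case False
        hence "f i = g i" using F by (intro f_oth)
        moreover have "ext x f u l i = f i"
          using F False unfolding ext_def by (cases "u = 0") simp_all
        ultimately show ?thesis by simp
      qed
    qed
  qed
  moreover have "(f, (u, l)) \<in> Sigma (Pt x) (Ch x)" using fP uC lC unfolding Ch_def by blast
  ultimately show ?thesis by (metis (no_types, lifting) case_prod_conv fst_conv snd_conv image_eqI)
qed

lemma Pt_Suc: "Pt (Suc x) = (\<lambda>(f, ul). ext x f (fst ul) (snd ul)) ` (Sigma (Pt x) (Ch x))"
proof
  show "Pt (Suc x) \<subseteq> (\<lambda>(f, ul). ext x f (fst ul) (snd ul)) ` (Sigma (Pt x) (Ch x))"
    using ext_surj by blast
  show "(\<lambda>(f, ul). ext x f (fst ul) (snd ul)) ` (Sigma (Pt x) (Ch x)) \<subseteq> Pt (Suc x)"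
  proof
    fix g assume "g \<in> (\<lambda>(f, ul). ext x f (fst ul) (snd ul)) ` (Sigma (Pt x) (Ch x))"
    then obtain f u l where "f \<in> Pt x" "(u, l) \<in> Ch x f" "g = ext x f u l" by auto
    thus "g \<in> Pt (Suc x)" using ext_Pt by simp
  qed
qed

lemma Pt_0: "Pt 0 = {id}"
  by (auto simp: Pt_def)

lemma finite_Pt: "finite (Pt x)"
proof (induction x)
  case 0 thus ?case by (simp add: Pt_0)
next
  case (Suc x)
  have "finite (Sigma (Pt x) (Ch x))"
    using Suc by (intro finite_SigmaI) (auto simp: Ch_def intro: finite_subset[OF Ou_sub] finite_subset[OF Ol_sub])
  thus ?case by (simp add: Pt_Suc)
qed


definition cU :: "(nat \<Rightarrow> nat) \<Rightarrow> nat \<Rightarrow> nat" where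
  "cU f y = (\<Sum>i\<in>{1..<y}. if f i = y then card {j\<in>{1..<i}. f j \<notin> {1..y}} else 0)"
definition cL :: "(nat \<Rightarrow> nat) \<Rightarrow> nat \<Rightarrow> nat" where
  "cL f y = (if 0 < f y \<and> f y < y then card ({1..<f y} - f ` {1..y}) else 0)"
definition cT :: "(nat \<Rightarrow> nat) \<Rightarrow> nat \<Rightarrow> nat" where
  "cT f y = (if f y \<notin> {1..y} then card ({1..y} - f ` {1..y}) else 0)
          + (if y \<notin> f ` {1..y} then card {i\<in>{1..<y}. f i \<notin> {1..y}} else 0)"
definition iscpk :: "(nat \<Rightarrow> nat) \<Rightarrow> nat \<Rightarrow> bool" where
  "iscpk f y = (y \<in> f ` {1..<y} \<and> 0 < f y \<and> f y < y)"
definition isexc :: "(nat \<Rightarrow> nat) \<Rightarrow> nat \<Rightarrow> bool" where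
  "isexc f y = (f y \<notin> {1..y})"

definition agree :: "nat \<Rightarrow> (nat \<Rightarrow> nat) \<Rightarrow> (nat \<Rightarrow> nat) \<Rightarrow> bool" where
  "agree y f g = (\<forall>i\<in>{1..y}. (f i \<in> {1..y} \<longleftrightarrow> g i \<in> {1..y}) \<and> (f i \<in> {1..y} \<longrightarrow> f i = g i))"

lemma agree_img:
  assumes "agree y f g" "S \<subseteq> {1..y}"
  shows "S - f ` {1..y} = S - g ` {1..y}"
proof -
  have "v \<in> f ` {1..y} \<longleftrightarrow> v \<in> g ` {1..y}" if v: "v \<in> {1..y}" for v
  proof
    assume "v \<in> f ` {1..y}"
    then obtain i where i: "i \<in> {1..y}" "v = f i" by auto
    thus "v \<in> g ` {1..y}" using assms(1) v unfolding agree_def by (metis image_eqI)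
  next
    assume "v \<in> g ` {1..y}"
    then obtain i where i: "i \<in> {1..y}" "v = g i" by auto
    thus "v \<in> f ` {1..y}" using assms(1) v unfolding agree_def by (metis image_eqI)
  qed
  thus ?thesis using assms(2) by blast
qed

lemma agree_mem:
  assumes "agree y f g" "v \<in> {1..y}"
  shows "v \<in> f ` {1..y} \<longleftrightarrow> v \<in> g ` {1..y}"
  using agree_img[OF assms(1), of "{v}"] assms(2) by auto

lemma agree_cU: "agree y f g \<Longrightarrow> cU f y = cU g y"
  unfolding cU_def
proof (intro sum.cong refl)
  fix i assume a: "agree y f g" and i: "i \<in> {1..<y}"
  have yy: "y \<in> {1..y}" using i by auto
  have i': "i \<in> {1..y}" using i by auto
  have e1: "f i = y \<longleftrightarrow> g i = y" using a i' yy unfolding agree_def by metis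
  have e2: "{j\<in>{1..<i}. f j \<notin> {1..y}} = {j\<in>{1..<i}. g j \<notin> {1..y}}"
    using a i unfolding agree_def by auto
  show "(if f i = y then card {j\<in>{1..<i}. f j \<notin> {1..y}} else 0) =
        (if g i = y then card {j\<in>{1..<i}. g j \<notin> {1..y}} else 0)"
    using e1 e2 by simp
qed

lemma agree_cL:
  assumes a: "agree y f g" shows "cL f y = cL g y"
proof (cases "y = 0")
  case True thus ?thesis by (simp add: cL_def)
next
  case False
  hence yy: "y \<in> {1..y}" by auto
  have c: "f y \<in> {1..y} \<longleftrightarrow> g y \<in> {1..y}" "f y \<in> {1..y} \<Longrightarrow> f y = g y"
    using a yy unfolding agree_def by blast+
  show ?thesis
  proof (cases "f y \<in> {1..y}")
    case True
    hence e: "g y = f y" using c by simp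
    have "{1..<f y} \<subseteq> {1..y}" using True by auto
    thus ?thesis using agree_img[OF a] e unfolding cL_def by simp
  next
    case False
    hence n1: "\<not> (0 < f y \<and> f y < y)" and n2: "\<not> (0 < g y \<and> g y < y)" using c by auto
    show ?thesis unfolding cL_def by (simp only: n1 n2 if_False)
  qed
qed

lemma agree_cT:
  assumes a: "agree y f g" shows "cT f y = cT g y"
proof (cases "y = 0")
  case True thus ?thesis by (simp add: cT_def)
next
  case False
  hence yy: "y \<in> {1..y}" by auto
  have c: "f y \<in> {1..y} \<longleftrightarrow> g y \<in> {1..y}"
    using a yy unfolding agree_def by blast
  have e1: "{1..y} - f ` {1..y} = {1..y} - g ` {1..y}" using agree_img[OF a] by simp
  have e2: "y \<in> f ` {1..y} \<longleftrightarrow> y \<in> g ` {1..y}" using agree_mem[OF a yy] .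
  have e3: "{i\<in>{1..<y}. f i \<notin> {1..y}} = {i\<in>{1..<y}. g i \<notin> {1..y}}"
    using a unfolding agree_def by auto
  show ?thesis unfolding cT_def using c e1 e2 e3 by simp
qed

lemma agree_iscpk:
  assumes a: "agree y f g" shows "iscpk f y = iscpk g y"
proof (cases "y = 0")
  case True thus ?thesis by (simp add: iscpk_def)
next
  case False
  hence yy: "y \<in> {1..y}" by auto
  have c: "f y \<in> {1..y} \<longleftrightarrow> g y \<in> {1..y}" "f y \<in> {1..y} \<Longrightarrow> f y = g y"
    using a yy unfolding agree_def by blast+
  have d: "(0 < f y \<and> f y < y) \<longleftrightarrow> (0 < g y \<and> g y < y)"
    using c by (cases "f y \<in> {1..y}") auto
  have e: "y \<in> f ` {1..<y} \<longleftrightarrow> y \<in> g ` {1..<y}"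
  proof
    assume "y \<in> f ` {1..<y}"
    then obtain i where i: "i \<in> {1..<y}" "f i = y" by auto
    hence "g i = y" using a yy unfolding agree_def by (metis atLeastLessThan_iff atLeastAtMost_iff less_imp_le)
    thus "y \<in> g ` {1..<y}" using i by auto
  next
    assume "y \<in> g ` {1..<y}"
    then obtain i where i: "i \<in> {1..<y}" "g i = y" by auto
    hence "f i = y" using a yy unfolding agree_def by (metis atLeastLessThan_iff atLeastAtMost_iff less_imp_le)
    thus "y \<in> f ` {1..<y}" using i by auto
  qed
  show ?thesis unfolding iscpk_def using d e by simp
qed

lemma agree_isexc:
  assumes a: "agree y f g" shows "isexc f y = isexc g y"
proof (cases "y = 0")
  case True thus ?thesis by (simp add: isexc_def)
next
  case False
  hence yy: "y \<in> {1..y}" by auto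
  thus ?thesis using a unfolding agree_def isexc_def by blast
qed

lemma ext_agree:
  assumes f: "f \<in> Pt x" and c: "(u, l) \<in> Ch x f" and y: "y \<le> x"
  shows "agree y f (ext x f u l)"
  unfolding agree_def
proof
  fix i assume i: "i \<in> {1..y}"
  have i1: "i \<noteq> Suc x" using i y by auto
  show "(f i \<in> {1..y} \<longleftrightarrow> ext x f u l i \<in> {1..y}) \<and> (f i \<in> {1..y} \<longrightarrow> f i = ext x f u l i)"
  proof (cases "u \<noteq> 0 \<and> i = u")
    case True
    hence "f i = 0" using c by (auto simp: Ch_def Ou_def)
    moreover have "ext x f u l i = Suc x" using ext_vals(2)[OF f c] True by simp
    ultimately show ?thesis using y by auto
  next
    case False
    hence "u = 0 \<or> i \<noteq> u" by blast
    hence "ext x f u l i = f i" using ext_vals(3)[OF f c i1] by blast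
    thus ?thesis by simp
  qed
qed


lemma ch_u: "(u, l) \<in> Ch x f \<Longrightarrow> u \<noteq> 0 \<Longrightarrow> u \<in> {1..x} \<and> f u = 0"
  by (auto simp: Ch_def Ou_def)
lemma ch_l: "(u, l) \<in> Ch x f \<Longrightarrow> l \<noteq> 0 \<Longrightarrow> l \<in> {1..x} \<and> l \<notin> f ` {1..x}"
  by (auto simp: Ch_def Ol_def)

lemma ext_img1:
  assumes f: "f \<in> Pt x" and c: "(u, l) \<in> Ch x f" and v: "v \<in> {1..x}"
  shows "v \<in> ext x f u l ` {1..x} \<longleftrightarrow> v \<in> f ` {1..x}"
proof
  assume "v \<in> ext x f u l ` {1..x}"
  then obtain i where i: "i \<in> {1..x}" "v = ext x f u l i" by auto
  have i1: "i \<noteq> Suc x" using i by auto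
  show "v \<in> f ` {1..x}"
  proof (cases "u \<noteq> 0 \<and> i = u")
    case True
    hence "v = Suc x" using ext_vals(2)[OF f c] i by simp
    thus ?thesis using v by simp
  next
    case False
    hence "u = 0 \<or> i \<noteq> u" by blast
    hence "v = f i" using ext_vals(3)[OF f c i1] i by simp
    thus ?thesis using i by simp
  qed
next
  assume "v \<in> f ` {1..x}"
  then obtain i where i: "i \<in> {1..x}" "v = f i" by auto
  have i1: "i \<noteq> Suc x" using i by auto
  have "\<not> (u \<noteq> 0 \<and> i = u)" using ch_u[OF c] i v by auto
  hence "u = 0 \<or> i \<noteq> u" by blast
  hence "v = ext x f u l i" using ext_vals(3)[OF f c i1] i by simp
  thus "v \<in> ext x f u l ` {1..x}" using i by simp
qed

lemma ext_img2:
  assumes f: "f \<in> Pt x" and c: "(u, l) \<in> Ch x f"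
  shows "Suc x \<in> ext x f u l ` {1..x} \<longleftrightarrow> u \<noteq> 0"
proof
  assume "Suc x \<in> ext x f u l ` {1..x}"
  then obtain i where i: "i \<in> {1..x}" "ext x f u l i = Suc x" by auto
  thus "u \<noteq> 0" using ext_vals(4)[OF f c i(1)] by simp
next
  assume u: "u \<noteq> 0"
  hence "u \<in> {1..x}" using ch_u[OF c] by simp
  thus "Suc x \<in> ext x f u l ` {1..x}" using ext_vals(2)[OF f c u] by (metis image_eqI)
qed

lemma ivl_Suc: "{1..Suc x} = insert (Suc x) {1..x}" by auto
lemma ivl_lt_Suc: "{1..<Suc x} = {1..x}" by auto

lemma step_cU:
  assumes f: "f \<in> Pt x" and c: "(u, l) \<in> Ch x f"
  shows "cU (ext x f u l) (Suc x) = (if u = 0 then 0 else card {j\<in>Ou x f. j < u})"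
proof -
  let ?g = "ext x f u l"
  let ?F = "\<lambda>i. card {j\<in>{1..<i}. ?g j \<notin> {1..Suc x}}"
  have "cU ?g (Suc x) = (\<Sum>i\<in>{1..x}. if ?g i = Suc x then ?F i else 0)"
    unfolding cU_def ivl_lt_Suc by simp
  also have "\<dots> = (\<Sum>i\<in>{1..x}. if u \<noteq> 0 \<and> i = u then ?F i else 0)"
    by (intro sum.cong refl) (simp add: ext_vals(4)[OF f c])
  also have "\<dots> = (if u = 0 then 0 else ?F u)"
  proof (cases "u = 0")
    case False
    hence "u \<in> {1..x}" using ch_u[OF c] by simp
    thus ?thesis using False by (simp add: sum.delta')
  qed simp
  also have "\<dots> = (if u = 0 then 0 else card {j\<in>Ou x f. j < u})"
  proof (cases "u = 0")
    case False
    hence u: "u \<in> {1..x}" "f u = 0" using ch_u[OF c] by auto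
    have "{j\<in>{1..<u}. ?g j \<notin> {1..Suc x}} = {j\<in>Ou x f. j < u}"
    proof (intro set_eqI iffI)
      fix j assume j: "j \<in> {j\<in>{1..<u}. ?g j \<notin> {1..Suc x}}"
      have j1: "j \<noteq> Suc x" "u = 0 \<or> j \<noteq> u" using j u by auto
      have e: "?g j = f j" using ext_vals(3)[OF f c j1(1) j1(2)] .
      have jx: "j \<in> {1..x}" using j u by auto
      have "f j \<le> x" using Pt_D(2)[OF f jx] .
      thus "j \<in> {j\<in>Ou x f. j < u}" using j e jx by (auto simp: Ou_def)
    next
      fix j assume j: "j \<in> {j\<in>Ou x f. j < u}"
      have j1: "j \<noteq> Suc x" "u = 0 \<or> j \<noteq> u" using j u by (auto simp: Ou_def)
      have e: "?g j = f j" using ext_vals(3)[OF f c j1(1) j1(2)] .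
      thus "j \<in> {j\<in>{1..<u}. ?g j \<notin> {1..Suc x}}" using j by (auto simp: Ou_def)
    qed
    thus ?thesis by simp
  qed simp
  finally show ?thesis .
qed

lemma step_cL:
  assumes f: "f \<in> Pt x" and c: "(u, l) \<in> Ch x f"
  shows "cL (ext x f u l) (Suc x) = (if l = 0 then 0 else card {v\<in>Ol x f. v < l})"
proof (cases "l = 0")
  case True thus ?thesis using ext_vals(1)[OF f c] by (simp add: cL_def)
next
  case False
  hence l: "l \<in> {1..x}" "l \<notin> f ` {1..x}" using ch_l[OF c] by auto
  let ?g = "ext x f u l"
  have gl: "?g (Suc x) = l" using ext_vals(1)[OF f c] .
  have "{1..<l} - ?g ` {1..Suc x} = {v\<in>Ol x f. v < l}"
  proof (intro set_eqI iffI)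
    fix v assume v: "v \<in> {1..<l} - ?g ` {1..Suc x}"
    hence vx: "v \<in> {1..x}" using l by auto
    have "v \<notin> ?g ` {1..x}" using v by (auto simp: ivl_Suc)
    hence "v \<notin> f ` {1..x}" using ext_img1[OF f c vx] by simp
    thus "v \<in> {v\<in>Ol x f. v < l}" using v vx by (auto simp: Ol_def)
  next
    fix v assume v: "v \<in> {v\<in>Ol x f. v < l}"
    hence vx: "v \<in> {1..x}" "v \<notin> f ` {1..x}" "v < l" by (auto simp: Ol_def)
    hence "v \<notin> ?g ` {1..x}" using ext_img1[OF f c vx(1)] by simp
    moreover have "v \<noteq> ?g (Suc x)" using gl vx by simp
    ultimately have "v \<notin> ?g ` {1..Suc x}" unfolding ivl_Suc image_insert by simp
    thus "v \<in> {1..<l} - ?g ` {1..Suc x}" using vx by simp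
  qed
  thus ?thesis using False gl l unfolding cL_def by simp
qed

lemma step_cT:
  assumes f: "f \<in> Pt x" and c: "(u, l) \<in> Ch x f"
  shows "cT (ext x f u l) (Suc x) = (if l = 0 then card (Ou x f) + (if u = 0 then 1 else 0) else 0)
      + (if u = 0 then card (Ou x f) else 0)"
proof -
  let ?g = "ext x f u l"
  have gl: "?g (Suc x) = l" using ext_vals(1)[OF f c] .
  have lx: "l \<le> x" using c by (auto simp: Ch_def Ol_def)
  have A: "(if ?g (Suc x) \<notin> {1..Suc x} then card ({1..Suc x} - ?g ` {1..Suc x}) else 0)
      = (if l = 0 then card (Ou x f) + (if u = 0 then 1 else 0) else 0)"
  proof (cases "l = 0")
    case True
    have "{1..Suc x} - ?g ` {1..Suc x} = Ol x f \<union> (if u = 0 then {Suc x} else {})"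
    proof (intro set_eqI iffI)
      fix v assume v: "v \<in> {1..Suc x} - ?g ` {1..Suc x}"
      show "v \<in> Ol x f \<union> (if u = 0 then {Suc x} else {})"
      proof (cases "v = Suc x")
        case True
        hence "u = 0" using v ext_img2[OF f c] by (auto simp: ivl_Suc)
        thus ?thesis using True by simp
      next
        case False
        hence vx: "v \<in> {1..x}" using v by auto
        have "v \<notin> ?g ` {1..x}" using v by (auto simp: ivl_Suc)
        hence "v \<notin> f ` {1..x}" using ext_img1[OF f c vx] by simp
        thus ?thesis using vx by (simp add: Ol_def)
      qed
    next
      fix v assume v: "v \<in> Ol x f \<union> (if u = 0 then {Suc x} else {})"
      show "v \<in> {1..Suc x} - ?g ` {1..Suc x}"
      proof (cases "v = Suc x")
        case True
        hence "u = 0" using v Ol_sub[of x f] by (auto split: if_splits)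
        hence "v \<notin> ?g ` {1..x}" using ext_img2[OF f c] True by simp
        moreover have "v \<noteq> ?g (Suc x)" using gl \<open>l = 0\<close> True by simp
        ultimately have "v \<notin> ?g ` {1..Suc x}" unfolding ivl_Suc image_insert by simp
        thus ?thesis using True by simp
      next
        case False
        hence vx: "v \<in> {1..x}" "v \<notin> f ` {1..x}" using v by (auto simp: Ol_def split: if_splits)
        hence "v \<notin> ?g ` {1..x}" using ext_img1[OF f c vx(1)] by simp
        moreover have "v \<noteq> ?g (Suc x)" using gl \<open>l = 0\<close> vx by simp
        ultimately have "v \<notin> ?g ` {1..Suc x}" unfolding ivl_Suc image_insert by simp
        thus ?thesis using vx by simp
      qed
    qed
    moreover have "Suc x \<notin> Ol x f" using Ol_sub[of x f] by auto
    moreover have "finite (Ol x f)" using finite_subset[OF Ol_sub] by blast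
    ultimately have "card ({1..Suc x} - ?g ` {1..Suc x}) = card (Ol x f) + (if u = 0 then 1 else 0)"
      by simp
    thus ?thesis using True gl card_Ou_Ol[OF f] by simp
  next
    case False
    thus ?thesis using gl lx by simp
  qed
  have B: "(if Suc x \<notin> ?g ` {1..Suc x} then card {i\<in>{1..<Suc x}. ?g i \<notin> {1..Suc x}} else 0)
      = (if u = 0 then card (Ou x f) else 0)"
  proof -
    have m: "Suc x \<in> ?g ` {1..Suc x} \<longleftrightarrow> u \<noteq> 0"
      unfolding ivl_Suc image_insert gl using ext_img2[OF f c] lx by simp
    show ?thesis
    proof (cases "u = 0")
      case True
      have "{i\<in>{1..<Suc x}. ?g i \<notin> {1..Suc x}} = Ou x f"
      proof (intro set_eqI iffI)
        fix i assume i: "i \<in> {i\<in>{1..<Suc x}. ?g i \<notin> {1..Suc x}}"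
        hence ix: "i \<in> {1..x}" "i \<noteq> Suc x" by auto
        have "?g i = f i" using ext_vals(3)[OF f c ix(2)] True by simp
        thus "i \<in> Ou x f" using i ix Pt_D(2)[OF f ix(1)] by (auto simp: Ou_def)
      next
        fix i assume i: "i \<in> Ou x f"
        hence ix: "i \<in> {1..x}" "i \<noteq> Suc x" by (auto simp: Ou_def)
        have "?g i = f i" using ext_vals(3)[OF f c ix(2)] True by simp
        thus "i \<in> {i\<in>{1..<Suc x}. ?g i \<notin> {1..Suc x}}" using i ix by (auto simp: Ou_def)
      qed
      thus ?thesis using m True by simp
    next
      case False thus ?thesis using m by simp
    qed
  qed
  show ?thesis unfolding cT_def A B ..
qed

lemma step_cpk:
  assumes f: "f \<in> Pt x" and c: "(u, l) \<in> Ch x f"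
  shows "iscpk (ext x f u l) (Suc x) \<longleftrightarrow> (u \<noteq> 0 \<and> l \<noteq> 0)"
proof -
  have lx: "l \<le> x" using c by (auto simp: Ch_def Ol_def)
  show ?thesis unfolding iscpk_def ivl_lt_Suc using ext_img2[OF f c] ext_vals(1)[OF f c] lx by auto
qed

lemma step_exc:
  assumes f: "f \<in> Pt x" and c: "(u, l) \<in> Ch x f"
  shows "isexc (ext x f u l) (Suc x) \<longleftrightarrow> l = 0"
proof -
  have lx: "l \<le> x" using c by (auto simp: Ch_def Ol_def)
  show ?thesis unfolding isexc_def using ext_vals(1)[OF f c] lx by auto
qed

lemma step_Ou:
  assumes f: "f \<in> Pt x" and c: "(u, l) \<in> Ch x f"
  shows "card (Ou (Suc x) (ext x f u l)) = (if u = 0 then card (Ou x f) else card (Ou x f) - 1) + (if l = 0 then 1 else 0)"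
proof -
  let ?g = "ext x f u l"
  have "Ou (Suc x) ?g = (Ou x f - {u}) \<union> (if l = 0 then {Suc x} else {})"
  proof (intro set_eqI iffI)
    fix i assume i: "i \<in> Ou (Suc x) ?g"
    show "i \<in> (Ou x f - {u}) \<union> (if l = 0 then {Suc x} else {})"
    proof (cases "i = Suc x")
      case True thus ?thesis using i ext_vals(1)[OF f c] by (simp add: Ou_def)
    next
      case F: False
      hence ix: "i \<in> {1..x}" "?g i = 0" using i by (auto simp: Ou_def)
      show ?thesis
      proof (cases "u \<noteq> 0 \<and> i = u")
        case True thus ?thesis using ext_vals(2)[OF f c] ix by simp
      next
        case False
        hence "u = 0 \<or> i \<noteq> u" by blast
        hence "?g i = f i" using ext_vals(3)[OF f c F] by simp
        thus ?thesis using ix False by (auto simp: Ou_def)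
      qed
    qed
  next
    fix i assume i: "i \<in> (Ou x f - {u}) \<union> (if l = 0 then {Suc x} else {})"
    show "i \<in> Ou (Suc x) ?g"
    proof (cases "i = Suc x")
      case True
      hence "l = 0" using i Ou_sub[of x f] by (auto split: if_splits)
      thus ?thesis using True ext_vals(1)[OF f c] by (simp add: Ou_def)
    next
      case F: False
      hence ix: "i \<in> Ou x f" "i \<noteq> u" using i by (auto split: if_splits)
      hence "?g i = f i" using ext_vals(3)[OF f c F] by simp
      thus ?thesis using ix by (auto simp: Ou_def)
    qed
  qed
  moreover have "finite (Ou x f)" using finite_subset[OF Ou_sub] by blast
  moreover have "Suc x \<notin> Ou x f - {u}" using Ou_sub[of x f] by auto
  moreover have "u \<noteq> 0 \<Longrightarrow> u \<in> Ou x f" using c by (auto simp: Ch_def)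
  moreover have "0 \<notin> Ou x f" by (auto simp: Ou_def)
  ultimately show ?thesis by (cases "u = 0"; cases "l = 0") (auto simp: card_insert_if)
qed


definition wt :: "bool \<Rightarrow> real \<Rightarrow> real \<Rightarrow> real \<Rightarrow> (nat \<Rightarrow> nat) \<Rightarrow> nat \<Rightarrow> real" where
  "wt ist q a b f y = q ^ (cU f y + cL f y + (if ist then cT f y else 0))
     * a ^ (if iscpk f y then 1 else 0) * b ^ (if isexc f y then 1 else 0)"

definition WW :: "bool \<Rightarrow> real \<Rightarrow> real \<Rightarrow> real \<Rightarrow> nat \<Rightarrow> (nat \<Rightarrow> nat) \<Rightarrow> real" where
  "WW ist q a b x f = (\<Prod>y\<in>{1..x}. wt ist q a b f y)"

definition GG :: "bool \<Rightarrow> real \<Rightarrow> real \<Rightarrow> real \<Rightarrow> nat \<Rightarrow> (nat \<Rightarrow> real) \<Rightarrow> real" where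
  "GG ist q a b x \<phi> = (\<Sum>f\<in>Pt x. WW ist q a b x f * \<phi> (card (Ou x f)))"

definition rk :: "nat set \<Rightarrow> nat \<Rightarrow> nat" where
  "rk S u = card {v\<in>S. v < u}"

definition Qs :: "real \<Rightarrow> nat \<Rightarrow> real" where
  "Qs q h = (\<Sum>r<h. q ^ r)"

definition Psi :: "bool \<Rightarrow> real \<Rightarrow> real \<Rightarrow> real \<Rightarrow> (nat \<Rightarrow> real) \<Rightarrow> nat \<Rightarrow> real" where
  "Psi ist q a b \<phi> h = b * q ^ (if ist then 2 * h + 1 else 0) * \<phi> (h + 1)
     + (1 + b) * q ^ (if ist then h else 0) * Qs q h * \<phi> h + a * (Qs q h)\<^sup>2 * \<phi> (h - 1)"

lemma rk_bij:
  assumes S: "finite S"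
  shows "bij_betw (rk S) S {..<card S}"
proof -
  have mono: "rk S u < rk S u'" if "u \<in> S" "u' \<in> S" "u < u'" for u u'
  proof -
    have "{v\<in>S. v < u} \<subset> {v\<in>S. v < u'}" using that by auto
    thus ?thesis unfolding rk_def by (intro psubset_card_mono) (use S in auto)
  qed
  have inj: "inj_on (rk S) S"
  proof (rule inj_onI)
    fix u u' assume "u \<in> S" "u' \<in> S" "rk S u = rk S u'"
    thus "u = u'" using mono by (metis less_irrefl linorder_neqE_nat)
  qed
  have sub: "rk S ` S \<subseteq> {..<card S}"
  proof
    fix r assume "r \<in> rk S ` S"
    then obtain u where u: "u \<in> S" "r = rk S u" by auto
    have "{v\<in>S. v < u} \<subset> S" using u by auto
    hence "card {v\<in>S. v < u} < card S" using S by (intro psubset_card_mono) auto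
    thus "r \<in> {..<card S}" using u by (simp add: rk_def)
  qed
  have "card (rk S ` S) = card {..<card S}" using inj by (simp add: card_image)
  hence "rk S ` S = {..<card S}" using sub by (intro card_subset_eq) auto
  thus ?thesis using inj by (simp add: bij_betw_def)
qed

lemma rk_sum:
  assumes S: "finite S"
  shows "(\<Sum>u\<in>S. q ^ rk S u) = Qs q (card S)"
  unfolding Qs_def using sum.reindex_bij_betw[OF rk_bij[OF S], of "\<lambda>r. q ^ r"] by simp

lemma WW_Suc:
  assumes f: "f \<in> Pt x" and c: "(u, l) \<in> Ch x f"
  shows "WW ist q a b (Suc x) (ext x f u l) = WW ist q a b x f * wt ist q a b (ext x f u l) (Suc x)"
proof -
  have "WW ist q a b (Suc x) (ext x f u l) = wt ist q a b (ext x f u l) (Suc x) * (\<Prod>y\<in>{1..x}. wt ist q a b (ext x f u l) y)"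
    unfolding WW_def ivl_Suc by (simp add: prod.insert)
  also have "(\<Prod>y\<in>{1..x}. wt ist q a b (ext x f u l) y) = WW ist q a b x f"
    unfolding WW_def
  proof (intro prod.cong refl)
    fix y assume y: "y \<in> {1..x}"
    have ag: "agree y f (ext x f u l)" using ext_agree[OF f c] y by simp
    show "wt ist q a b (ext x f u l) y = wt ist q a b f y"
      unfolding wt_def using agree_cU[OF ag] agree_cL[OF ag] agree_cT[OF ag] agree_iscpk[OF ag] agree_isexc[OF ag]
      by simp
  qed
  finally show ?thesis by simp
qed

lemma step_sum:
  assumes f: "f \<in> Pt x"
  shows "(\<Sum>ul\<in>Ch x f. wt ist q a b (ext x f (fst ul) (snd ul)) (Suc x) * \<phi> (card (Ou (Suc x) (ext x f (fst ul) (snd ul)))))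
       = Psi ist q a b \<phi> (card (Ou x f))"
proof -
  define h where "h = card (Ou x f)"
  define F where "F = (\<lambda>u l. wt ist q a b (ext x f u l) (Suc x) * \<phi> (card (Ou (Suc x) (ext x f u l))))"
  have fO: "finite (Ou x f)" "finite (Ol x f)" using finite_subset[OF Ou_sub] finite_subset[OF Ol_sub] by blast+
  have nO: "0 \<notin> Ou x f" "0 \<notin> Ol x f" by (auto simp: Ou_def Ol_def)
  have hl: "card (Ol x f) = h" using card_Ou_Ol[OF f] h_def by simp
  have chs: "(u, l) \<in> Ch x f" if "u \<in> insert 0 (Ou x f)" "l \<in> insert 0 (Ol x f)" for u l
    using that unfolding Ch_def by blast
  have W: "wt ist q a b (ext x f u l) (Suc x) =
      q ^ ((if u = 0 then 0 else rk (Ou x f) u) + (if l = 0 then 0 else rk (Ol x f) l)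
        + (if ist then (if l = 0 then h + (if u = 0 then 1 else 0) else 0) + (if u = 0 then h else 0) else 0))
      * a ^ (if u \<noteq> 0 \<and> l \<noteq> 0 then 1 else 0) * b ^ (if l = 0 then 1 else 0)"
    if c: "(u, l) \<in> Ch x f" for u l
    unfolding wt_def step_cU[OF f c] step_cL[OF f c] step_cT[OF f c] step_cpk[OF f c] step_exc[OF f c] rk_def h_def
    by simp
  have H: "card (Ou (Suc x) (ext x f u l)) = (if u = 0 then h else h - 1) + (if l = 0 then 1 else 0)"
    if c: "(u, l) \<in> Ch x f" for u l
    using step_Ou[OF f c] h_def by simp
  have F00: "F 0 0 = b * q ^ (if ist then 2 * h + 1 else 0) * \<phi> (h + 1)"
    using W[OF chs] H[OF chs] unfolding F_def by (simp add: mult_2)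
  have F0l: "F 0 l = q ^ (if ist then h else 0) * q ^ rk (Ol x f) l * \<phi> h" if l: "l \<in> Ol x f" for l
  proof -
    have l0: "l \<noteq> 0" using l nO(2) by metis
    have c: "(0, l) \<in> Ch x f" using l by (simp add: Ch_def)
    show ?thesis using W[OF c] H[OF c] l0 unfolding F_def by (simp add: power_add)
  qed
  have Fu0: "F u 0 = b * q ^ (if ist then h else 0) * q ^ rk (Ou x f) u * \<phi> h" if u: "u \<in> Ou x f" for u
  proof -
    have u0: "u \<noteq> 0" using u nO(1) by metis
    have c: "(u, 0) \<in> Ch x f" using u by (simp add: Ch_def)
    have "h \<noteq> 0" using u fO h_def by auto
    hence "h - 1 + 1 = h" by simp
    thus ?thesis using W[OF c] H[OF c] u0 unfolding F_def by (simp add: power_add)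
  qed
  have Ful: "F u l = a * (q ^ rk (Ou x f) u * q ^ rk (Ol x f) l) * \<phi> (h - 1)" if u: "u \<in> Ou x f" and l: "l \<in> Ol x f" for u l
  proof -
    have u0: "u \<noteq> 0" "l \<noteq> 0" using u l nO by metis+
    have c: "(u, l) \<in> Ch x f" using u l by (simp add: Ch_def)
    show ?thesis using W[OF c] H[OF c] u0 unfolding F_def by (simp add: power_add)
  qed
  have "(\<Sum>ul\<in>Ch x f. wt ist q a b (ext x f (fst ul) (snd ul)) (Suc x) * \<phi> (card (Ou (Suc x) (ext x f (fst ul) (snd ul)))))
      = (\<Sum>(u, l)\<in>insert 0 (Ou x f) \<times> insert 0 (Ol x f). F u l)"
    unfolding Ch_def F_def by (intro sum.cong refl) auto
  also have "\<dots> = (\<Sum>u\<in>insert 0 (Ou x f). \<Sum>l\<in>insert 0 (Ol x f). F u l)"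
    by (rule sum.cartesian_product[symmetric])
  also have "\<dots> = (F 0 0 + (\<Sum>l\<in>Ol x f. F 0 l)) + (\<Sum>u\<in>Ou x f. F u 0 + (\<Sum>l\<in>Ol x f. F u l))"
    using fO nO by (simp add: sum.insert)
  also have "(\<Sum>l\<in>Ol x f. F 0 l) = q ^ (if ist then h else 0) * Qs q h * \<phi> h"
  proof -
    have "(\<Sum>l\<in>Ol x f. F 0 l) = (\<Sum>l\<in>Ol x f. q ^ (if ist then h else 0) * \<phi> h * q ^ rk (Ol x f) l)"
      using F0l by (intro sum.cong refl) (simp add: mult_ac)
    also have "\<dots> = q ^ (if ist then h else 0) * \<phi> h * (\<Sum>l\<in>Ol x f. q ^ rk (Ol x f) l)"
      by (simp add: sum_distrib_left)
    also have "\<dots> = q ^ (if ist then h else 0) * Qs q h * \<phi> h" using rk_sum[OF fO(2)] hl by simp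
    finally show ?thesis .
  qed
  also have "(\<Sum>u\<in>Ou x f. F u 0 + (\<Sum>l\<in>Ol x f. F u l))
      = b * q ^ (if ist then h else 0) * Qs q h * \<phi> h + a * (Qs q h)\<^sup>2 * \<phi> (h - 1)"
  proof -
    have "(\<Sum>u\<in>Ou x f. F u 0 + (\<Sum>l\<in>Ol x f. F u l))
       = (\<Sum>u\<in>Ou x f. b * q ^ (if ist then h else 0) * \<phi> h * q ^ rk (Ou x f) u
            + a * \<phi> (h - 1) * q ^ rk (Ou x f) u * (\<Sum>l\<in>Ol x f. q ^ rk (Ol x f) l))"
    proof (intro sum.cong refl)
      fix u assume u: "u \<in> Ou x f"
      have "(\<Sum>l\<in>Ol x f. F u l) = (\<Sum>l\<in>Ol x f. a * \<phi> (h - 1) * q ^ rk (Ou x f) u * q ^ rk (Ol x f) l)"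
        using Ful[OF u] by (intro sum.cong refl) (simp add: mult_ac)
      also have "\<dots> = a * \<phi> (h - 1) * q ^ rk (Ou x f) u * (\<Sum>l\<in>Ol x f. q ^ rk (Ol x f) l)"
        by (simp add: sum_distrib_left)
      finally show "F u 0 + (\<Sum>l\<in>Ol x f. F u l) = b * q ^ (if ist then h else 0) * \<phi> h * q ^ rk (Ou x f) u
            + a * \<phi> (h - 1) * q ^ rk (Ou x f) u * (\<Sum>l\<in>Ol x f. q ^ rk (Ol x f) l)"
        using Fu0[OF u] by (simp add: mult_ac)
    qed
    also have "\<dots> = b * q ^ (if ist then h else 0) * \<phi> h * (\<Sum>u\<in>Ou x f. q ^ rk (Ou x f) u)
        + a * \<phi> (h - 1) * (\<Sum>u\<in>Ou x f. q ^ rk (Ou x f) u) * (\<Sum>l\<in>Ol x f. q ^ rk (Ol x f) l)"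
      by (simp add: sum.distrib sum_distrib_left sum_distrib_right mult_ac)
    also have "\<dots> = b * q ^ (if ist then h else 0) * Qs q h * \<phi> h + a * (Qs q h)\<^sup>2 * \<phi> (h - 1)"
      using rk_sum[OF fO(1)] rk_sum[OF fO(2)] hl h_def by (simp add: power2_eq_square mult_ac)
    finally show ?thesis .
  qed
  finally show ?thesis unfolding Psi_def h_def[symmetric] F00 by (simp add: algebra_simps)
qed

lemma GG_Suc: "GG ist q a b (Suc x) \<phi> = GG ist q a b x (Psi ist q a b \<phi>)"
proof -
  let ?E = "\<lambda>(f, ul). ext x f (fst ul) (snd ul)"
  have "GG ist q a b (Suc x) \<phi> = (\<Sum>g\<in>?E ` Sigma (Pt x) (Ch x). WW ist q a b (Suc x) g * \<phi> (card (Ou (Suc x) g)))"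
    unfolding GG_def Pt_Suc ..
  also have "\<dots> = (\<Sum>p\<in>Sigma (Pt x) (Ch x). WW ist q a b (Suc x) (?E p) * \<phi> (card (Ou (Suc x) (?E p))))"
    by (rule sum.reindex[OF ext_inj, unfolded comp_def])
  also have "\<dots> = (\<Sum>f\<in>Pt x. \<Sum>ul\<in>Ch x f. WW ist q a b (Suc x) (ext x f (fst ul) (snd ul)) * \<phi> (card (Ou (Suc x) (ext x f (fst ul) (snd ul)))))"
    apply (subst sum.Sigma)
      apply (simp add: finite_Pt)
     apply (auto simp: Ch_def intro: finite_subset[OF Ou_sub] finite_subset[OF Ol_sub])[1]
    apply (intro sum.cong refl)
    apply (auto split: prod.splits)
    done
  also have "\<dots> = (\<Sum>f\<in>Pt x. WW ist q a b x f * Psi ist q a b \<phi> (card (Ou x f)))"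
  proof (intro sum.cong refl)
    fix f assume f: "f \<in> Pt x"
    have "(\<Sum>ul\<in>Ch x f. WW ist q a b (Suc x) (ext x f (fst ul) (snd ul)) * \<phi> (card (Ou (Suc x) (ext x f (fst ul) (snd ul)))))
        = (\<Sum>ul\<in>Ch x f. WW ist q a b x f * (wt ist q a b (ext x f (fst ul) (snd ul)) (Suc x) * \<phi> (card (Ou (Suc x) (ext x f (fst ul) (snd ul))))))"
    proof (intro sum.cong refl)
      fix ul assume "ul \<in> Ch x f"
      hence c: "(fst ul, snd ul) \<in> Ch x f" by simp
      show "WW ist q a b (Suc x) (ext x f (fst ul) (snd ul)) * \<phi> (card (Ou (Suc x) (ext x f (fst ul) (snd ul))))
          = WW ist q a b x f * (wt ist q a b (ext x f (fst ul) (snd ul)) (Suc x) * \<phi> (card (Ou (Suc x) (ext x f (fst ul) (snd ul)))))"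
        using WW_Suc[OF f c] by simp
    qed
    also have "\<dots> = WW ist q a b x f * Psi ist q a b \<phi> (card (Ou x f))"
      using step_sum[OF f] by (simp add: sum_distrib_left[symmetric])
    finally show "(\<Sum>ul\<in>Ch x f. WW ist q a b (Suc x) (ext x f (fst ul) (snd ul)) * \<phi> (card (Ou (Suc x) (ext x f (fst ul) (snd ul)))))
        = WW ist q a b x f * Psi ist q a b \<phi> (card (Ou x f))" .
  qed
  finally show ?thesis unfolding GG_def .
qed

lemma GG_0: "GG ist q a b 0 \<phi> = \<phi> 0"
  by (simp add: GG_def Pt_0 WW_def Ou_def)

lemma GG_scale: "GG ist q a b x (\<lambda>h. c * \<psi> h) = c * GG ist q a b x \<psi>"
  unfolding GG_def by (simp add: sum_distrib_left mult_ac)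

lemma GG_cong: "(\<And>h. \<phi> h = \<psi> h) \<Longrightarrow> GG ist q a b x \<phi> = GG ist q a b x \<psi>"
  by (metis ext)

lemma GG_transfer:
  assumes hb: "b = c * \<rho> * t" and ha: "a * \<rho> = c" and hl: "1 + b = c * (1 + t)"
  shows "GG ist q a b x \<phi> = c ^ x * GG ist q 1 t x (\<lambda>h. \<rho> ^ h * \<phi> h)"
proof (induction x arbitrary: \<phi>)
  case 0 thus ?case by (simp add: GG_0)
next
  case (Suc x)
  have key: "\<rho> ^ h * Psi ist q a b \<phi> h = c * Psi ist q 1 t (\<lambda>h. \<rho> ^ h * \<phi> h) h" for h
  proof -
    let ?mu = "q ^ (if ist then 2 * h + 1 else 0)" and ?nu = "q ^ (if ist then h else 0)" and ?Q = "Qs q h"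
    have t1: "\<rho> ^ h * (b * ?mu * \<phi> (h + 1)) = c * (t * ?mu * (\<rho> ^ (h + 1) * \<phi> (h + 1)))"
      using hb by (simp add: mult_ac)
    have t2: "\<rho> ^ h * ((1 + b) * ?nu * ?Q * \<phi> h) = c * ((1 + t) * ?nu * ?Q * (\<rho> ^ h * \<phi> h))"
      using hl by (simp add: mult_ac)
    have t3: "\<rho> ^ h * (a * ?Q\<^sup>2 * \<phi> (h - 1)) = c * (1 * ?Q\<^sup>2 * (\<rho> ^ (h - 1) * \<phi> (h - 1)))"
    proof (cases h)
      case 0 thus ?thesis by (simp add: Qs_def)
    next
      case (Suc k)
      have "\<rho> ^ h * a = c * \<rho> ^ k" using ha Suc by (simp add: mult_ac)
      thus ?thesis using Suc by (metis (no_types, lifting) diff_Suc_1 mult.assoc mult.left_commute mult_1)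
    qed
    have "\<rho> ^ h * Psi ist q a b \<phi> h = \<rho> ^ h * (b * ?mu * \<phi> (h + 1)) + \<rho> ^ h * ((1 + b) * ?nu * ?Q * \<phi> h)
        + \<rho> ^ h * (a * ?Q\<^sup>2 * \<phi> (h - 1))" unfolding Psi_def by (simp only: distrib_left)
    also have "\<dots> = c * (t * ?mu * (\<rho> ^ (h + 1) * \<phi> (h + 1))) + c * ((1 + t) * ?nu * ?Q * (\<rho> ^ h * \<phi> h))
        + c * (1 * ?Q\<^sup>2 * (\<rho> ^ (h - 1) * \<phi> (h - 1)))" unfolding t1 t2 t3 ..
    also have "\<dots> = c * Psi ist q 1 t (\<lambda>h. \<rho> ^ h * \<phi> h) h" unfolding Psi_def by (simp only: distrib_left)
    finally show ?thesis .
  qed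
  have "GG ist q a b (Suc x) \<phi> = c ^ x * GG ist q 1 t x (\<lambda>h. \<rho> ^ h * Psi ist q a b \<phi> h)"
    unfolding GG_Suc by (rule Suc.IH)
  also have "GG ist q 1 t x (\<lambda>h. \<rho> ^ h * Psi ist q a b \<phi> h) = c * GG ist q 1 t x (Psi ist q 1 t (\<lambda>h. \<rho> ^ h * \<phi> h))"
    unfolding key by (rule GG_scale)
  finally show ?case unfolding GG_Suc by simp
qed


lemma der_facts:
  assumes d: "\<sigma> \<in> derangements n"
  shows "\<sigma> permutes {1..n}" "\<And>i. i \<in> {1..n} \<Longrightarrow> \<sigma> i \<noteq> i"
    "\<And>i. \<sigma> i \<in> {1..n} \<longleftrightarrow> i \<in> {1..n}" "\<And>i. i \<notin> {1..n} \<Longrightarrow> \<sigma> i = i"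
    "inj \<sigma>"
  using d unfolding derangements_def
  by (auto dest: permutes_in_image permutes_not_in permutes_inj)

lemma Pt_der: "{f\<in>Pt n. card (Ou n f) = 0} = derangements n"
proof (intro set_eqI iffI)
  fix f assume "f \<in> {f\<in>Pt n. card (Ou n f) = 0}"
  hence f: "f \<in> Pt n" and c: "card (Ou n f) = 0" by auto
  have "Ou n f = {}" using c finite_subset[OF Ou_sub] by (metis card_0_eq finite_atLeastAtMost)
  hence nz: "\<And>i. i \<in> {1..n} \<Longrightarrow> f i \<noteq> 0" by (auto simp: Ou_def)
  note D = Pt_D[OF f]
  have inj: "inj_on f {1..n}"
  proof -
    have "{i\<in>{1..n}. f i \<noteq> 0} = {1..n}" using nz by auto
    thus ?thesis using f by (metis (no_types, lifting) Pt_def mem_Collect_eq)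
  qed
  have sub: "f ` {1..n} \<subseteq> {1..n}" using D(2) nz by fastforce
  have "f ` {1..n} = {1..n}" by (rule endo_inj_surj[OF _ sub inj]) simp
  hence "bij_betw f {1..n} {1..n}" using inj by (simp add: bij_betw_def)
  hence "f permutes {1..n}" using D(1) by (intro bij_imp_permutes) auto
  thus "f \<in> derangements n" using D(3) by (simp add: derangements_def)
next
  fix f assume d: "f \<in> derangements n"
  note E = der_facts[OF d]
  have a1: "\<forall>i. i \<notin> {1..n} \<longrightarrow> f i = i" using E(4) by blast
  have a2: "\<forall>i\<in>{1..n}. f i \<le> n \<and> f i \<noteq> i"
  proof
    fix i assume i: "i \<in> {1..n}"
    have "f i \<in> {1..n}" using E(3)[of i] i by simp
    thus "f i \<le> n \<and> f i \<noteq> i" using E(2)[OF i] by simp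
  qed
  have a3: "inj_on f {i\<in>{1..n}. f i \<noteq> 0}" using inj_on_subset[OF E(5)] by blast
  have "f \<in> Pt n" unfolding Pt_def using a1 a2 a3 by blast
  moreover have "Ou n f = {}"
  proof -
    have "f i \<noteq> 0" if "i \<in> {1..n}" for i using E(3)[of i] that by auto
    thus ?thesis unfolding Ou_def by blast
  qed
  ultimately show "f \<in> {f\<in>Pt n. card (Ou n f) = 0}" by simp
qed

lemma sum_bool_card: "finite A \<Longrightarrow> (\<Sum>y\<in>A. (if P y then 1 else 0::nat)) = card {y\<in>A. P y}"
  by (simp add: sum.inter_filter[symmetric])

lemma cpk_eq:
  assumes d: "\<sigma> \<in> derangements n"
  shows "card {y\<in>{1..n}. iscpk \<sigma> y} = cpk_stat n \<sigma>"
proof -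
  note E = der_facts[OF d]
  have "iscpk \<sigma> y \<longleftrightarrow> inv \<sigma> y < y \<and> \<sigma> y < y" if y: "y \<in> {1..n}" for y
  proof -
    have iv: "inv \<sigma> y \<in> {1..n}" using permutes_in_image[OF permutes_inv[OF E(1)]] y by simp
    have si: "\<sigma> (inv \<sigma> y) = y" using permutes_inverses(1)[OF E(1)] .
    have "y \<in> \<sigma> ` {1..<y} \<longleftrightarrow> inv \<sigma> y < y"
    proof
      assume "y \<in> \<sigma> ` {1..<y}"
      then obtain i where i: "i \<in> {1..<y}" "y = \<sigma> i" by auto
      hence "inv \<sigma> y = i" using permutes_inverses(2)[OF E(1)] by simp
      thus "inv \<sigma> y < y" using i by simp
    next
      assume "inv \<sigma> y < y"
      hence "inv \<sigma> y \<in> {1..<y}" using iv by simp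
      thus "y \<in> \<sigma> ` {1..<y}" using si by (metis image_eqI)
    qed
    moreover have "0 < \<sigma> y" using E(3)[of y] y by auto
    ultimately show ?thesis unfolding iscpk_def by blast
  qed
  thus ?thesis unfolding cpk_stat_def by (intro arg_cong[where f=card]) auto
qed

lemma exc_eq:
  assumes d: "\<sigma> \<in> derangements n"
  shows "card {y\<in>{1..n}. isexc \<sigma> y} = exc_stat n \<sigma>"
proof -
  note E = der_facts[OF d]
  have "isexc \<sigma> y \<longleftrightarrow> y < \<sigma> y" if y: "y \<in> {1..n}" for y
    using E(3)[of y] y unfolding isexc_def by auto
  thus ?thesis unfolding exc_stat_def by (intro arg_cong[where f=card]) auto
qed


lemma sum_cU:
  assumes d: "\<sigma> \<in> derangements n"
  shows "(\<Sum>y\<in>{1..n}. cU \<sigma> y) = (\<Sum>i\<in>{1..n}. card {j\<in>{1..n}. j < i \<and> i < \<sigma> i \<and> \<sigma> i < \<sigma> j})"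
proof -
  note E = der_facts[OF d]
  define C where "C = (\<lambda>i y. card {j\<in>{1..<i}. \<sigma> j \<notin> {1..y}})"
  have "(\<Sum>y\<in>{1..n}. cU \<sigma> y) = (\<Sum>y\<in>{1..n}. \<Sum>i\<in>{1..n}. if i < y \<and> \<sigma> i = y then C i y else 0)"
  proof (intro sum.cong refl)
    fix y assume y: "y \<in> {1..n}"
    have fe: "{i\<in>{1..n}. i < y} = {1..<y}" using y by auto
    have "(\<Sum>i\<in>{1..n}. if i < y then (if \<sigma> i = y then C i y else 0) else 0)
        = (\<Sum>i\<in>{i\<in>{1..n}. i < y}. if \<sigma> i = y then C i y else 0)"
      by (rule sum.inter_filter[symmetric]) simp
    also have "\<dots> = cU \<sigma> y" unfolding fe cU_def C_def ..
    finally have "cU \<sigma> y = (\<Sum>i\<in>{1..n}. if i < y then (if \<sigma> i = y then C i y else 0) else 0)" by simp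
    also have "\<dots> = (\<Sum>i\<in>{1..n}. if i < y \<and> \<sigma> i = y then C i y else 0)"
      by (intro sum.cong refl) simp
    finally show "cU \<sigma> y = (\<Sum>i\<in>{1..n}. if i < y \<and> \<sigma> i = y then C i y else 0)" .
  qed
  also have "\<dots> = (\<Sum>i\<in>{1..n}. \<Sum>y\<in>{1..n}. if i < y \<and> \<sigma> i = y then C i y else 0)"
    by (rule sum.swap)
  also have "\<dots> = (\<Sum>i\<in>{1..n}. card {j\<in>{1..n}. j < i \<and> i < \<sigma> i \<and> \<sigma> i < \<sigma> j})"
  proof (intro sum.cong refl)
    fix i assume i: "i \<in> {1..n}"
    have si: "\<sigma> i \<in> {1..n}" using E(3) i by simp
    have "(\<Sum>y\<in>{1..n}. if i < y \<and> \<sigma> i = y then C i y else 0) = (\<Sum>y\<in>{1..n}. if \<sigma> i = y then (if i < \<sigma> i then C i (\<sigma> i) else 0) else 0)"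
    proof (intro sum.cong refl)
      fix y
      show "(if i < y \<and> \<sigma> i = y then C i y else 0) = (if \<sigma> i = y then (if i < \<sigma> i then C i (\<sigma> i) else 0) else 0)"
        by (cases "\<sigma> i = y") simp_all
    qed
    also have "\<dots> = (if i < \<sigma> i then C i (\<sigma> i) else 0)" using si by (simp only: sum.delta' finite_atLeastAtMost if_True)
    also have "\<dots> = card {j\<in>{1..n}. j < i \<and> i < \<sigma> i \<and> \<sigma> i < \<sigma> j}"
    proof (cases "i < \<sigma> i")
      case True
      have "{j\<in>{1..<i}. \<sigma> j \<notin> {1..\<sigma> i}} = {j\<in>{1..n}. j < i \<and> i < \<sigma> i \<and> \<sigma> i < \<sigma> j}"
      proof (intro set_eqI iffI)
        fix j assume j: "j \<in> {j\<in>{1..<i}. \<sigma> j \<notin> {1..\<sigma> i}}"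
        have jn: "j \<in> {1..n}" "j < i" using i j by auto
        hence "\<sigma> j \<in> {1..n}" using E(3) by simp
        hence "\<sigma> i < \<sigma> j" using j by auto
        thus "j \<in> {j\<in>{1..n}. j < i \<and> i < \<sigma> i \<and> \<sigma> i < \<sigma> j}" using jn True by simp
      next
        fix j assume j: "j \<in> {j\<in>{1..n}. j < i \<and> i < \<sigma> i \<and> \<sigma> i < \<sigma> j}"
        thus "j \<in> {j\<in>{1..<i}. \<sigma> j \<notin> {1..\<sigma> i}}" by auto
      qed
      thus ?thesis using True by (simp add: C_def)
    next
      case False
      hence "{j\<in>{1..n}. j < i \<and> i < \<sigma> i \<and> \<sigma> i < \<sigma> j} = {}" by auto
      thus ?thesis using False by simp
    qed
    finally show "(\<Sum>y\<in>{1..n}. if i < y \<and> \<sigma> i = y then C i y else 0) = card {j\<in>{1..n}. j < i \<and> i < \<sigma> i \<and> \<sigma> i < \<sigma> j}" .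
  qed
  finally show ?thesis .
qed


lemma img_below:
  assumes d: "\<sigma> \<in> derangements n" and i: "i \<in> {1..n}" and v: "v \<le> Suc i"
  shows "card {j\<in>{1..n}. i < j \<and> \<sigma> j < v} = card ({1..<v} - \<sigma> ` {1..i})"
proof -
  note E = der_facts[OF d]
  have "\<sigma> ` {j\<in>{1..n}. i < j \<and> \<sigma> j < v} = {1..<v} - \<sigma> ` {1..i}"
  proof (intro set_eqI iffI)
    fix w assume "w \<in> \<sigma> ` {j\<in>{1..n}. i < j \<and> \<sigma> j < v}"
    then obtain j where j: "j \<in> {1..n}" "i < j" "\<sigma> j < v" "w = \<sigma> j" by auto
    have "\<sigma> j \<in> {1..n}" using E(3) j by simp
    moreover have "\<sigma> j \<notin> \<sigma> ` {1..i}"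
    proof
      assume "\<sigma> j \<in> \<sigma> ` {1..i}"
      then obtain k where "k \<in> {1..i}" "\<sigma> j = \<sigma> k" by auto
      thus False using E(5) j(2) by (metis atLeastAtMost_iff injD not_le)
    qed
    ultimately show "w \<in> {1..<v} - \<sigma> ` {1..i}" using j by auto
  next
    fix w assume w: "w \<in> {1..<v} - \<sigma> ` {1..i}"
    hence wn: "w \<in> {1..n}" using v i by auto
    have "w \<in> \<sigma> ` {1..n}" using permutes_image[OF E(1)] wn by simp
    then obtain j where j: "j \<in> {1..n}" "w = \<sigma> j" by auto
    have "j \<notin> {1..i}" using w j by auto
    hence "i < j" using j by auto
    thus "w \<in> \<sigma> ` {j\<in>{1..n}. i < j \<and> \<sigma> j < v}" using j w by auto
  qed
  moreover have "inj_on \<sigma> {j\<in>{1..n}. i < j \<and> \<sigma> j < v}" using inj_on_subset[OF E(5)] by blast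
  ultimately show ?thesis by (metis card_image)
qed

lemma sum_cL:
  assumes d: "\<sigma> \<in> derangements n"
  shows "(\<Sum>y\<in>{1..n}. cL \<sigma> y) = (\<Sum>i\<in>{1..n}. card {j\<in>{1..n}. \<sigma> j < \<sigma> i \<and> \<sigma> i \<le> i \<and> i < j})"
proof (intro sum.cong refl)
  note E = der_facts[OF d]
  fix i assume i: "i \<in> {1..n}"
  have si: "\<sigma> i \<in> {1..n}" "\<sigma> i \<noteq> i" using E(3) E(2) i by auto
  show "cL \<sigma> i = card {j\<in>{1..n}. \<sigma> j < \<sigma> i \<and> \<sigma> i \<le> i \<and> i < j}"
  proof (cases "\<sigma> i < i")
    case True
    have "{j\<in>{1..n}. \<sigma> j < \<sigma> i \<and> \<sigma> i \<le> i \<and> i < j} = {j\<in>{1..n}. i < j \<and> \<sigma> j < \<sigma> i}"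
      using True by auto
    moreover have "0 < \<sigma> i" using si by auto
    ultimately show ?thesis unfolding cL_def using True img_below[OF d i, of "\<sigma> i"] by simp
  next
    case False
    hence "{j\<in>{1..n}. \<sigma> j < \<sigma> i \<and> \<sigma> i \<le> i \<and> i < j} = {}" using si by auto
    thus ?thesis unfolding cL_def using False by simp
  qed
qed

lemma nest_eq:
  assumes d: "\<sigma> \<in> derangements n"
  shows "nest_stat n \<sigma> = (\<Sum>y\<in>{1..n}. cU \<sigma> y + cL \<sigma> y)"
proof -
  have "nest_stat n \<sigma> = (\<Sum>i\<in>{1..n}. card {j\<in>{1..n}. j < i \<and> i < \<sigma> i \<and> \<sigma> i < \<sigma> j}
      + card {j\<in>{1..n}. \<sigma> j < \<sigma> i \<and> \<sigma> i \<le> i \<and> i < j})"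
    unfolding nest_stat_def
  proof (intro sum.cong refl)
    fix i
    have "{j\<in>{1..n}. (j < i \<and> i < \<sigma> i \<and> \<sigma> i < \<sigma> j) \<or> (\<sigma> j < \<sigma> i \<and> \<sigma> i \<le> i \<and> i < j)}
        = {j\<in>{1..n}. j < i \<and> i < \<sigma> i \<and> \<sigma> i < \<sigma> j} \<union> {j\<in>{1..n}. \<sigma> j < \<sigma> i \<and> \<sigma> i \<le> i \<and> i < j}" by auto
    moreover have "{j\<in>{1..n}. j < i \<and> i < \<sigma> i \<and> \<sigma> i < \<sigma> j} \<inter> {j\<in>{1..n}. \<sigma> j < \<sigma> i \<and> \<sigma> i \<le> i \<and> i < j} = {}" by auto
    ultimately show "card {j\<in>{1..n}. (j < i \<and> i < \<sigma> i \<and> \<sigma> i < \<sigma> j) \<or> (\<sigma> j < \<sigma> i \<and> \<sigma> i \<le> i \<and> i < j)}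
      = card {j\<in>{1..n}. j < i \<and> i < \<sigma> i \<and> \<sigma> i < \<sigma> j} + card {j\<in>{1..n}. \<sigma> j < \<sigma> i \<and> \<sigma> i \<le> i \<and> i < j}"
      by (simp add: card_Un_disjoint)
  qed
  also have "\<dots> = (\<Sum>y\<in>{1..n}. cU \<sigma> y) + (\<Sum>y\<in>{1..n}. cL \<sigma> y)"
    using sum_cU[OF d] sum_cL[OF d] by (simp add: sum.distrib)
  finally show ?thesis by (simp add: sum.distrib)
qed


lemma card_swap: "card ((\<lambda>(j, i). (i, j)) ` S) = card S"
  by (rule card_image) (auto simp: inj_on_def)

lemma inv_eq:
  assumes d: "\<sigma> \<in> derangements n"
  shows "inv_stat n \<sigma> = (\<Sum>y\<in>{1..n}. cU \<sigma> y + cL \<sigma> y + cT \<sigma> y)"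
proof -
  note E = der_facts[OF d]
  define N where "N = {1..n::nat}"
  define A where "A = (\<lambda>i. {j\<in>N. j < i \<and> i < \<sigma> i \<and> \<sigma> i < \<sigma> j})"
  define B where "B = (\<lambda>i. {j\<in>N. \<sigma> j < \<sigma> i \<and> \<sigma> i \<le> i \<and> i < j})"
  define R1 where "R1 = (\<lambda>i. {j\<in>N. i < \<sigma> i \<and> i < j \<and> \<sigma> j \<le> i})"
  define R2 where "R2 = (\<lambda>j. {i\<in>N. \<sigma> j < j \<and> i < \<sigma> j \<and> \<sigma> j < \<sigma> i})"
  define Inv where "Inv = {(i, j). i \<in> N \<and> j \<in> N \<and> i < j \<and> \<sigma> i > \<sigma> j}"
  define UU where "UU = (\<lambda>(j, i). (i, j)) ` Sigma N A"
  define T2 where "T2 = (\<lambda>(j, i). (i, j)) ` Sigma N R2"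
  have fN: "finite N" by (simp add: N_def)
  have sN: "\<And>i. \<sigma> i \<in> N \<longleftrightarrow> i \<in> N" using E(3) by (simp add: N_def)
  have fp: "\<And>i. i \<in> N \<Longrightarrow> \<sigma> i \<noteq> i" using E(2) by (simp add: N_def)
  have N1: "\<And>i. i \<in> N \<Longrightarrow> 1 \<le> i" by (simp add: N_def)
  have mUU: "p \<in> UU \<longleftrightarrow> fst p \<in> N \<and> snd p \<in> N \<and> fst p < snd p \<and> snd p < \<sigma> (snd p) \<and> \<sigma> (snd p) < \<sigma> (fst p)" for p
    unfolding UU_def A_def by (cases p) auto
  have mT2: "p \<in> T2 \<longleftrightarrow> fst p \<in> N \<and> snd p \<in> N \<and> \<sigma> (snd p) < snd p \<and> fst p < \<sigma> (snd p) \<and> \<sigma> (snd p) < \<sigma> (fst p)" for p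
    unfolding T2_def R2_def by (cases p) auto
  have split: "Inv = ((UU \<union> Sigma N B) \<union> Sigma N R1) \<union> T2"
  proof (intro set_eqI iffI)
    fix p assume p: "p \<in> Inv"
    obtain i j where ij: "p = (i, j)" by (cases p)
    have h: "i \<in> N" "j \<in> N" "i < j" "\<sigma> j < \<sigma> i" using p ij by (auto simp: Inv_def)
    have hi: "\<sigma> i \<noteq> i" "\<sigma> j \<noteq> j" using fp h by auto
    show "p \<in> ((UU \<union> Sigma N B) \<union> Sigma N R1) \<union> T2"
    proof (cases "\<sigma> i < i")
      case True thus ?thesis using h ij by (auto simp: B_def)
    next
      case F1: False
      hence si: "i < \<sigma> i" using hi by simp
      show ?thesis
      proof (cases "j < \<sigma> j")
        case True thus ?thesis using h ij mUU by auto
      next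
        case False
        hence sj: "\<sigma> j < j" using hi by simp
        show ?thesis
        proof (cases "\<sigma> j \<le> i")
          case True thus ?thesis using h ij si by (auto simp: R1_def)
        next
          case False thus ?thesis using h ij sj mT2 by auto
        qed
      qed
    qed
  next
    fix p assume p: "p \<in> ((UU \<union> Sigma N B) \<union> Sigma N R1) \<union> T2"
    obtain i j where ij: "p = (i, j)" by (cases p)
    from p show "p \<in> Inv"
    proof (elim UnE)
      assume "p \<in> UU" thus ?thesis using ij mUU by (auto simp: Inv_def)
    next
      assume "p \<in> Sigma N B" thus ?thesis using ij by (auto simp: Inv_def B_def)
    next
      assume "p \<in> Sigma N R1" thus ?thesis using ij by (auto simp: Inv_def R1_def)
    next
      assume "p \<in> T2" thus ?thesis using ij mT2 by (auto simp: Inv_def)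
    qed
  qed
  have fin: "finite UU" "finite (Sigma N B)" "finite (Sigma N R1)" "finite T2"
    using fN by (auto simp: UU_def T2_def A_def B_def R1_def R2_def)
  have d1: "UU \<inter> Sigma N B = {}"
  proof -
    have "False" if "p \<in> UU" "p \<in> Sigma N B" for p
    proof -
      obtain i j where ij: "p = (i, j)" by (cases p)
      thus False using that mUU by (auto simp: B_def)
    qed
    thus ?thesis by blast
  qed
  have d2: "(UU \<union> Sigma N B) \<inter> Sigma N R1 = {}"
  proof -
    have "False" if "p \<in> UU \<union> Sigma N B" "p \<in> Sigma N R1" for p
    proof -
      obtain i j where ij: "p = (i, j)" by (cases p)
      thus False using that mUU by (auto simp: B_def R1_def)
    qed
    thus ?thesis by blast
  qed
  have d3: "((UU \<union> Sigma N B) \<union> Sigma N R1) \<inter> T2 = {}"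
  proof -
    have "False" if "p \<in> (UU \<union> Sigma N B) \<union> Sigma N R1" "p \<in> T2" for p
    proof -
      obtain i j where ij: "p = (i, j)" by (cases p)
      thus False using that mUU mT2 by (auto simp: B_def R1_def)
    qed
    thus ?thesis by blast
  qed
  have "card Inv = card UU + card (Sigma N B) + card (Sigma N R1) + card T2"
    unfolding split using fin d1 d2 d3 by (simp add: card_Un_disjoint)
  also have "card UU = (\<Sum>y\<in>{1..n}. cU \<sigma> y)"
    unfolding UU_def card_swap using fN sum_cU[OF d] by (simp add: A_def N_def)
  also have "card (Sigma N B) = (\<Sum>y\<in>{1..n}. cL \<sigma> y)"
    using fN sum_cL[OF d] by (simp add: B_def N_def)
  also have "card (Sigma N R1) = (\<Sum>y\<in>{1..n}. if \<sigma> y \<notin> {1..y} then card ({1..y} - \<sigma> ` {1..y}) else 0)"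
  proof -
    have "card (Sigma N R1) = (\<Sum>i\<in>N. card (R1 i))" using fN by (simp add: R1_def)
    also have "\<dots> = (\<Sum>y\<in>{1..n}. if \<sigma> y \<notin> {1..y} then card ({1..y} - \<sigma> ` {1..y}) else 0)"
      unfolding N_def
    proof (intro sum.cong refl)
      fix i assume i: "i \<in> {1..n}"
      have si: "\<sigma> i \<in> {1..n}" using E(3) i by simp
      show "card (R1 i) = (if \<sigma> i \<notin> {1..i} then card ({1..i} - \<sigma> ` {1..i}) else 0)"
      proof (cases "i < \<sigma> i")
        case True
        have "R1 i = {j\<in>{1..n}. i < j \<and> \<sigma> j < Suc i}" using True by (auto simp: R1_def N_def)
        moreover have "{1..<Suc i} = {1..i}" by auto
        ultimately show ?thesis using img_below[OF d i, of "Suc i"] True by simp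
      next
        case False
        hence "R1 i = {}" by (auto simp: R1_def)
        thus ?thesis using False si by auto
      qed
    qed
    finally show ?thesis .
  qed
  also have "card T2 = (\<Sum>y\<in>{1..n}. if y \<notin> \<sigma> ` {1..y} then card {i\<in>{1..<y}. \<sigma> i \<notin> {1..y}} else 0)"
  proof -
    define G where "G = (\<lambda>y. if y \<notin> \<sigma> ` {1..y} then card {i\<in>{1..<y}. \<sigma> i \<notin> {1..y}} else 0)"
    have "card T2 = (\<Sum>j\<in>N. card (R2 j))" unfolding T2_def card_swap using fN by (simp add: R2_def)
    also have "\<dots> = (\<Sum>j\<in>N. G (\<sigma> j))"
    proof (intro sum.cong refl)
      fix j assume j: "j \<in> N"
      have sj: "\<sigma> j \<in> N" using sN j by simp
      have e1: "\<sigma> j \<notin> \<sigma> ` {1..\<sigma> j} \<longleftrightarrow> \<sigma> j < j"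
      proof
        assume "\<sigma> j \<notin> \<sigma> ` {1..\<sigma> j}"
        hence "j \<notin> {1..\<sigma> j}" by auto
        thus "\<sigma> j < j" using N1[OF j] by auto
      next
        assume a: "\<sigma> j < j"
        show "\<sigma> j \<notin> \<sigma> ` {1..\<sigma> j}"
        proof
          assume "\<sigma> j \<in> \<sigma> ` {1..\<sigma> j}"
          then obtain k where "k \<in> {1..\<sigma> j}" "\<sigma> j = \<sigma> k" by auto
          thus False using E(5) a by (metis atLeastAtMost_iff injD not_le)
        qed
      qed
      show "card (R2 j) = G (\<sigma> j)"
      proof (cases "\<sigma> j < j")
        case True
        have "R2 j = {i\<in>{1..<\<sigma> j}. \<sigma> i \<notin> {1..\<sigma> j}}"
        proof (intro set_eqI iffI)
          fix i assume i: "i \<in> R2 j"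
          thus "i \<in> {i\<in>{1..<\<sigma> j}. \<sigma> i \<notin> {1..\<sigma> j}}" by (auto simp: R2_def N_def)
        next
          fix i assume i: "i \<in> {i\<in>{1..<\<sigma> j}. \<sigma> i \<notin> {1..\<sigma> j}}"
          have iN: "i \<in> N" using i sj by (auto simp: N_def)
          hence "\<sigma> i \<in> N" using sN by simp
          thus "i \<in> R2 j" using i iN True by (auto simp: R2_def N_def)
        qed
        thus ?thesis using True e1 by (simp add: G_def)
      next
        case False
        hence "R2 j = {}" by (auto simp: R2_def)
        thus ?thesis using False e1 by (simp add: G_def)
      qed
    qed
    also have "\<dots> = (\<Sum>y\<in>\<sigma> ` N. G y)"
      by (rule sum.reindex[symmetric, unfolded comp_def]) (rule inj_on_subset[OF E(5)], simp)
    also have "\<sigma> ` N = N" using permutes_image[OF E(1)] by (simp add: N_def)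
    finally show ?thesis by (simp add: G_def N_def)
  qed
  finally have "card Inv = (\<Sum>y\<in>{1..n}. cU \<sigma> y) + (\<Sum>y\<in>{1..n}. cL \<sigma> y) + (\<Sum>y\<in>{1..n}. cT \<sigma> y)"
    unfolding cT_def by (simp add: sum.distrib)
  moreover have "inv_stat n \<sigma> = card Inv" unfolding inv_stat_def Inv_def N_def by simp
  ultimately show ?thesis by (simp add: sum.distrib)
qed


lemma WW_der:
  assumes d: "\<sigma> \<in> derangements n"
  shows "WW ist q a b n \<sigma> = q ^ (\<Sum>y\<in>{1..n}. cU \<sigma> y + cL \<sigma> y + (if ist then cT \<sigma> y else 0))
     * a ^ cpk_stat n \<sigma> * b ^ exc_stat n \<sigma>"
proof -
  have "WW ist q a b n \<sigma> = (\<Prod>y\<in>{1..n}. q ^ (cU \<sigma> y + cL \<sigma> y + (if ist then cT \<sigma> y else 0)))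
      * (\<Prod>y\<in>{1..n}. a ^ (if iscpk \<sigma> y then 1 else 0)) * (\<Prod>y\<in>{1..n}. b ^ (if isexc \<sigma> y then 1 else 0))"
    unfolding WW_def wt_def by (simp only: prod.distrib)
  also have "\<dots> = q ^ (\<Sum>y\<in>{1..n}. cU \<sigma> y + cL \<sigma> y + (if ist then cT \<sigma> y else 0))
      * a ^ (\<Sum>y\<in>{1..n}. if iscpk \<sigma> y then 1 else 0) * b ^ (\<Sum>y\<in>{1..n}. if isexc \<sigma> y then 1 else 0)"
    by (simp only: power_sum)
  also have "(\<Sum>y\<in>{1..n}. if iscpk \<sigma> y then 1 else 0) = cpk_stat n \<sigma>"
    using sum_bool_card[of "{1..n}" "iscpk \<sigma>"] cpk_eq[OF d] by simp
  also have "(\<Sum>y\<in>{1..n}. if isexc \<sigma> y then 1 else 0) = exc_stat n \<sigma>"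
    using sum_bool_card[of "{1..n}" "isexc \<sigma>"] exc_eq[OF d] by simp
  finally show ?thesis .
qed


lemma GG_der:
  assumes st: "\<And>\<sigma>. \<sigma> \<in> derangements n \<Longrightarrow> stat \<sigma> = (\<Sum>y\<in>{1..n}. cU \<sigma> y + cL \<sigma> y + (if ist then cT \<sigma> y else 0))"
  shows "GG ist q a b n (\<lambda>h. if h = 0 then 1 else 0) = P3 (derangements n) stat (cpk_stat n) (exc_stat n) q a b"
proof -
  have "GG ist q a b n (\<lambda>h. if h = 0 then 1 else 0) = (\<Sum>f\<in>Pt n. if card (Ou n f) = 0 then WW ist q a b n f else 0)"
    unfolding GG_def by (intro sum.cong refl) simp
  also have "\<dots> = (\<Sum>f\<in>{f\<in>Pt n. card (Ou n f) = 0}. WW ist q a b n f)"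
    by (rule sum.inter_filter[symmetric]) (rule finite_Pt)
  also have "\<dots> = (\<Sum>\<sigma>\<in>derangements n. WW ist q a b n \<sigma>)" unfolding Pt_der ..
  also have "\<dots> = P3 (derangements n) stat (cpk_stat n) (exc_stat n) q a b"
    unfolding P3_def
  proof (intro sum.cong refl)
    fix \<sigma> assume d: "\<sigma> \<in> derangements n"
    show "WW ist q a b n \<sigma> = q ^ stat \<sigma> * a ^ cpk_stat n \<sigma> * b ^ exc_stat n \<sigma>"
      unfolding WW_der[OF d] st[OF d] ..
  qed
  finally show ?thesis .
qed

lemma GG_der2:
  assumes st: "\<And>\<sigma>. \<sigma> \<in> derangements n \<Longrightarrow> stat \<sigma> = (\<Sum>y\<in>{1..n}. cU \<sigma> y + cL \<sigma> y + (if ist then cT \<sigma> y else 0))"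
  shows "GG ist q 1 t n (\<lambda>h. if h = 0 then 1 else 0) = P2 (derangements n) stat (exc_stat n) q t"
  using GG_der[OF st, of q 1 t] unfolding P3_def P2_def by (simp only: power_one mult_1_right)


lemma card_ne0: "finite S \<Longrightarrow> z \<in> S \<Longrightarrow> card S \<noteq> 0"
  using card_0_eq by blast

lemma exc_pos:
  assumes d: "\<sigma> \<in> derangements n" and n: "n \<ge> 1"
  shows "exc_stat n \<sigma> \<noteq> 0"
proof -
  note E = der_facts[OF d]
  have one: "1 \<in> {1..n}" using n by simp
  have "\<sigma> 1 \<in> {1..n}" using E(3) one by blast
  moreover have "\<sigma> 1 \<noteq> 1" using E(2) one by blast
  ultimately have "1 < \<sigma> 1" by simp
  hence "1 \<in> {i\<in>{1..n}. i < \<sigma> i}" using one by simp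
  hence "card {i\<in>{1..n}. i < \<sigma> i} \<noteq> 0" by (rule card_ne0[rotated]) simp
  thus ?thesis by (simp add: exc_stat_def)
qed

lemma cpk_pos:
  assumes d: "\<sigma> \<in> derangements n" and n: "n \<ge> 1"
  shows "cpk_stat n \<sigma> \<noteq> 0"
proof -
  note E = der_facts[OF d]
  have nn: "n \<in> {1..n}" using n by simp
  have s1: "\<sigma> n \<in> {1..n}" using E(3) nn by blast
  have s2: "\<sigma> n \<noteq> n" using E(2) nn by blast
  have iv: "inv \<sigma> n \<in> {1..n}" using permutes_in_image[OF permutes_inv[OF E(1)]] nn by blast
  have "inv \<sigma> n \<noteq> n"
  proof
    assume "inv \<sigma> n = n"
    hence "\<sigma> n = n" using permutes_inverses(1)[OF E(1), of n] by simp
    thus False using s2 by simp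
  qed
  hence "inv \<sigma> n < n" "\<sigma> n < n" using iv s1 s2 by auto
  hence "n \<in> {x\<in>{1..n}. inv \<sigma> x < x \<and> \<sigma> x < x}" using nn by simp
  hence "card {x\<in>{1..n}. inv \<sigma> x < x \<and> \<sigma> x < x} \<noteq> 0" by (rule card_ne0[rotated]) simp
  thus ?thesis by (simp add: cpk_stat_def)
qed


lemma aux_field:
  fixes u v t :: real
  assumes "u \<noteq> 0" "v \<noteq> 0" "t \<noteq> 0"
  shows "(u^2 * t / v^2) / (u / v * t) = u / v"
  using assms by (simp add: field_simps power2_eq_square)

lemma main_ist:
  fixes n :: nat and q x t :: real
  assumes n: "n \<ge> 1" and h1: "1 + x \<noteq> 0" and h2: "x + t \<noteq> 0" and h3: "1 + x * t \<noteq> 0"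
    and st: "\<And>\<sigma>. \<sigma> \<in> derangements n \<Longrightarrow> stat \<sigma> = (\<Sum>y\<in>{1..n}. cU \<sigma> y + cL \<sigma> y + (if ist then cT \<sigma> y else 0))"
  shows "P2 (derangements n) stat (exc_stat n) q t =
      ((1 + x * t) / (1 + x)) ^ n *
      P3 (derangements n) stat (cpk_stat n) (exc_stat n)
         q ((1 + x)^2 * t / ((x + t) * (1 + x * t))) ((x + t) / (1 + x * t))"
proof (cases "t = 0")
  case True
  have "P2 (derangements n) stat (exc_stat n) q t = 0"
    unfolding P2_def using exc_pos[OF _ n] True by (intro sum.neutral) simp
  moreover have "P3 (derangements n) stat (cpk_stat n) (exc_stat n) q ((1 + x)^2 * t / ((x + t) * (1 + x * t))) ((x + t) / (1 + x * t)) = 0"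
    unfolding P3_def using cpk_pos[OF _ n] True by (intro sum.neutral) simp
  ultimately show ?thesis by simp
next
  case False
  define a where "a = (1 + x)^2 * t / ((x + t) * (1 + x * t))"
  define b where "b = (x + t) / (1 + x * t)"
  define c where "c = (1 + x) / (1 + x * t)"
  define \<rho> where "\<rho> = b / (c * t)"
  have c0: "c \<noteq> 0" using h1 h3 by (simp add: c_def)
  have hb: "b = c * \<rho> * t" using c0 False by (simp add: \<rho>_def)
  have ab: "a * b = (1 + x)^2 * t / (1 + x * t)^2"
    unfolding a_def b_def using h2 h3 by (simp add: power2_eq_square)
  have ha: "a * \<rho> = c"
  proof -
    have "a * \<rho> = (a * b) / (c * t)" by (simp add: \<rho>_def)
    also have "\<dots> = ((1 + x)^2 * t / (1 + x * t)^2) / ((1 + x) / (1 + x * t) * t)" unfolding ab c_def ..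
    also have "\<dots> = (1 + x) / (1 + x * t)" using h1 h3 False by (rule aux_field)
    finally show ?thesis by (simp add: c_def)
  qed
  have hl: "1 + b = c * (1 + t)"
    unfolding b_def c_def using h3 by (simp add: field_simps)
  have "P3 (derangements n) stat (cpk_stat n) (exc_stat n) q a b = GG ist q a b n (\<lambda>h. if h = 0 then 1 else 0)"
    using GG_der[OF st] by simp
  also have "\<dots> = c ^ n * GG ist q 1 t n (\<lambda>h. \<rho> ^ h * (if h = 0 then 1 else 0))"
    by (rule GG_transfer[OF hb ha hl])
  also have "(\<lambda>h. \<rho> ^ h * (if h = 0 then 1 else 0)) = (\<lambda>h. if h = 0 then 1 else 0)" by auto
  also have "GG ist q 1 t n (\<lambda>h. if h = 0 then 1 else 0) = P2 (derangements n) stat (exc_stat n) q t"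
    using GG_der2[OF st] by simp
  finally have e: "P3 (derangements n) stat (cpk_stat n) (exc_stat n) q a b = c ^ n * P2 (derangements n) stat (exc_stat n) q t" .
  have cc: "(1 + x * t) / (1 + x) * c = 1" using h1 h3 by (simp add: c_def)
  have "((1 + x * t) / (1 + x)) ^ n * (c ^ n * P2 (derangements n) stat (exc_stat n) q t) = P2 (derangements n) stat (exc_stat n) q t"
  proof -
    have "((1 + x * t) / (1 + x)) ^ n * (c ^ n * P2 (derangements n) stat (exc_stat n) q t)
        = (((1 + x * t) / (1 + x)) * c) ^ n * P2 (derangements n) stat (exc_stat n) q t"
      by (simp only: power_mult_distrib mult.assoc)
    thus ?thesis unfolding cc by simp
  qed
  thus ?thesis using e by (simp add: a_def b_def)
qed

theorem corollary3p7:
  fixes n :: nat and q x t :: real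
  assumes "n \<ge> 1" and "1 + x \<noteq> 0" and "x + t \<noteq> 0" and "1 + x * t \<noteq> 0"
  shows "\<forall>stat \<in> {nest_stat n, inv_stat n}.
    P2 (derangements n) stat (exc_stat n) q t =
      ((1 + x * t) / (1 + x)) ^ n *
      P3 (derangements n) stat (cpk_stat n) (exc_stat n)
         q ((1 + x)^2 * t / ((x + t) * (1 + x * t))) ((x + t) / (1 + x * t))"
proof
  fix stat assume "stat \<in> {nest_stat n, inv_stat n}"
  then consider "stat = nest_stat n" | "stat = inv_stat n" by blast
  thus "P2 (derangements n) stat (exc_stat n) q t =
      ((1 + x * t) / (1 + x)) ^ n *
      P3 (derangements n) stat (cpk_stat n) (exc_stat n)
         q ((1 + x)^2 * t / ((x + t) * (1 + x * t))) ((x + t) / (1 + x * t))"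
  proof cases
    case 1
    show ?thesis using main_ist[OF assms, of stat False] nest_eq 1 by simp
  next
    case 2
    show ?thesis using main_ist[OF assms, of stat True] inv_eq 2 by simp
  qed
qed

end
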